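(* Let $g \geq 3$ be an odd integer. If $G$ is a graph on $n$ vertices whose girth is $g$ or $g+1$, then $$P(G,m) - P_{DP}(G,m) = O(m^{n-g}) \quad \text{as } m \to \infty.$$ Consequently, for every graph $M$, $$P(M,m) - P_{DP}(M,m) = O(m^{|V(M)|-3}) \quad \text{as } m \to \infty.$$
   Context: All graphs are finite and simple. The girth of a graph is the length of a shortest cycle (infinite if the graph is acyclic). For $m \in \mathbb{N}$, $[m]=\{1,\dots,m\}$, and $P(G,m)$ (the chromatic polynomial) is the number of proper colorings $V(G) \to [m]$. For $S,U \subseteq V(H)$, $E_H(S,U)$ is the set of edges of $H$ with one endpoint in $S$ and the other in $U$. A cover of a graph $G$ is a pair $\mathcal{H}=(L,H)$ where $H$ is a graph and $L: V(G)\to \mathcal{P}(V(H))$ satisfies: (1) $\{L(u): u\in V(G)\}$ is a partition of $V(H)$; (2) for each $u \in V(G)$, $H[L(u)]$ is complete; (3) if $E_H(L(u),L(v))\neq\emptyset$ then $u=v$ or $uv\in E(G)$; (4) if $uv \in E(G)$ then $E_H(L(u),L(v))$ is a matching (possibly empty). The cover is $m$-fold if $|L(u)|=m$ for all $u\in V(G)$. An $\mathcal{H}$-coloring of $G$ is an independent set $I$ of $H$ with $|I|=|V(G)|$ (equivalently, an independent set with $|I\cap L(u)|=1$ for every $u$). $P_{DP}(G,\mathcal{H})$ is the number of $\mathcal{H}$-colorings of $G$, and the DP color function is $P_{DP}(G,m)=\min P_{DP}(G,\mathcal{H})$, the minimum over all $m$-fold covers $\mathcal{H}$ of $G$, for $m\in\mathbb{N}$.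 *)

theory Defs
  imports Complex_Main "HOL-Library.Extended_Nat" "HOL-Library.FuncSet" "HOL-Library.Landau_Symbols"
begin

type_synonym 'a graph = "'a set \<times> 'a set set"

definition verts :: "'a graph \<Rightarrow> 'a set" where "verts G = fst G"
definition edges :: "'a graph \<Rightarrow> 'a set set" where "edges G = snd G"

definition wf_graph :: "'a graph \<Rightarrow> bool" where
  "wf_graph G \<longleftrightarrow> finite (verts G) \<and>
     (\<forall>e\<in>edges G. \<exists>x y. x \<noteq> y \<and> e = {x, y} \<and> x \<in> verts G \<and> y \<in> verts G)"

definition has_cycle :: "'a graph \<Rightarrow> nat \<Rightarrow> bool" where
  "has_cycle G k \<longleftrightarrow> k \<ge> 3 \<and> (\<exists>vs. length vs = k \<and> distinct vs \<and> set vs \<subseteq> verts G \<and>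
      (\<forall>i<k. {vs ! i, vs ! ((i + 1) mod k)} \<in> edges G))"

text \<open>Girth: length of a shortest cycle, infinity if acyclic.\<close>
definition girth :: "'a graph \<Rightarrow> enat" where
  "girth G = Inf {enat k | k. has_cycle G k}"

definition chrom_poly :: "'a graph \<Rightarrow> nat \<Rightarrow> nat" where
  "chrom_poly G m = card {f \<in> verts G \<rightarrow>\<^sub>E {1..m}. \<forall>u v. {u, v} \<in> edges G \<longrightarrow> u \<noteq> v \<longrightarrow> f u \<noteq> f v}"

definition cross_edges :: "'b graph \<Rightarrow> 'b set \<Rightarrow> 'b set \<Rightarrow> 'b set set" where
  "cross_edges H S U = {e \<in> edges H. \<exists>x\<in>S. \<exists>y\<in>U. e = {x, y}}"

definition is_matching :: "'b set set \<Rightarrow> bool" where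
  "is_matching M \<longleftrightarrow> (\<forall>e1\<in>M. \<forall>e2\<in>M. e1 \<noteq> e2 \<longrightarrow> e1 \<inter> e2 = {})"

text \<open>A cover (L,H) of G; the vertices of H are taken to be natural numbers
  (every finite cover is isomorphic to one of this form).\<close>
definition is_cover :: "'a graph \<Rightarrow> ('a \<Rightarrow> nat set) \<Rightarrow> nat graph \<Rightarrow> bool" where
  "is_cover G L H \<longleftrightarrow> wf_graph H \<and>
     (\<Union>u\<in>verts G. L u) = verts H \<and>
     (\<forall>u\<in>verts G. \<forall>v\<in>verts G. u \<noteq> v \<longrightarrow> L u \<inter> L v = {}) \<and>
     (\<forall>u\<in>verts G. \<forall>x\<in>L u. \<forall>y\<in>L u. x \<noteq> y \<longrightarrow> {x, y} \<in> edges H) \<and>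
     (\<forall>u\<in>verts G. \<forall>v\<in>verts G. cross_edges H (L u) (L v) \<noteq> {} \<longrightarrow> u = v \<or> {u, v} \<in> edges G) \<and>
     (\<forall>u\<in>verts G. \<forall>v\<in>verts G. {u, v} \<in> edges G \<longrightarrow> u \<noteq> v \<longrightarrow> is_matching (cross_edges H (L u) (L v)))"

definition is_mfold_cover :: "'a graph \<Rightarrow> nat \<Rightarrow> ('a \<Rightarrow> nat set) \<Rightarrow> nat graph \<Rightarrow> bool" where
  "is_mfold_cover G m L H \<longleftrightarrow> is_cover G L H \<and> (\<forall>u\<in>verts G. finite (L u) \<and> card (L u) = m)"

definition independent :: "'b graph \<Rightarrow> 'b set \<Rightarrow> bool" where
  "independent H I \<longleftrightarrow> I \<subseteq> verts H \<and> (\<forall>x\<in>I. \<forall>y\<in>I. {x, y} \<notin> edges H)"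

text \<open>Number of H-colorings of G: independent sets of H of size |V(G)|.\<close>
definition P_DP_cover :: "'a graph \<Rightarrow> nat graph \<Rightarrow> nat" where
  "P_DP_cover G H = card {I. independent H I \<and> card I = card (verts G)}"

definition P_DP :: "'a graph \<Rightarrow> nat \<Rightarrow> nat" where
  "P_DP G m = Inf {P_DP_cover G H | L H. is_mfold_cover G m L H}"

end

theory Submission
  imports Defs "HOL-Library.Nat_Bijection"
begin

definition confl :: "('a \<Rightarrow> nat \<Rightarrow> 'a \<Rightarrow> nat \<Rightarrow> bool) \<Rightarrow> ('a \<Rightarrow> nat) \<Rightarrow> 'a set \<Rightarrow> bool" where
  "confl R c e \<longleftrightarrow> (\<exists>u v. e = {u,v} \<and> u \<noteq> v \<and> R u (c u) v (c v))"

definition Bs :: "'a set \<Rightarrow> ('a \<Rightarrow> nat set) \<Rightarrow> ('a \<Rightarrow> nat \<Rightarrow> 'a \<Rightarrow> nat \<Rightarrow> bool) \<Rightarrow> 'a set set \<Rightarrow> ('a \<Rightarrow> nat) set" where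
  "Bs V X R F = {c \<in> PiE V X. \<forall>e\<in>F. confl R c e}"

definition Ns :: "'a set \<Rightarrow> ('a \<Rightarrow> nat set) \<Rightarrow> ('a \<Rightarrow> nat \<Rightarrow> 'a \<Rightarrow> nat \<Rightarrow> bool) \<Rightarrow> 'a set set \<Rightarrow> ('a \<Rightarrow> nat) set" where
  "Ns V X R E = {c \<in> PiE V X. \<forall>e\<in>E. \<not> confl R c e}"

definition msys :: "'a set \<Rightarrow> 'a set set \<Rightarrow> nat \<Rightarrow> ('a \<Rightarrow> nat set) \<Rightarrow> ('a \<Rightarrow> nat \<Rightarrow> 'a \<Rightarrow> nat \<Rightarrow> bool) \<Rightarrow> bool" where
  "msys V E m X R \<longleftrightarrow> (\<forall>u\<in>V. finite (X u) \<and> card (X u) = m) \<and> (\<forall>u a v b. R u a v b \<longrightarrow> R v b u a) \<and>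
     (\<forall>u\<in>V. \<forall>v\<in>V. u \<noteq> v \<longrightarrow> {u,v} \<in> E \<longrightarrow> (\<forall>a\<in>X u. \<forall>b\<in>X v. \<forall>b'\<in>X v. R u a v b \<longrightarrow> R u a v b' \<longrightarrow> b = b'))"

definition bsys :: "'a set \<Rightarrow> 'a set set \<Rightarrow> nat \<Rightarrow> ('a \<Rightarrow> nat set) \<Rightarrow> ('a \<Rightarrow> nat \<Rightarrow> 'a \<Rightarrow> nat \<Rightarrow> bool) \<Rightarrow> bool" where
  "bsys V E m X R \<longleftrightarrow> msys V E m X R \<and> (\<forall>u\<in>V. \<forall>v\<in>V. u \<noteq> v \<longrightarrow> {u,v} \<in> E \<longrightarrow> (\<forall>a\<in>X u. \<exists>b\<in>X v. R u a v b))"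

definition gwf :: "'a set \<Rightarrow> 'a set set \<Rightarrow> bool" where
  "gwf V E \<longleftrightarrow> finite V \<and> (\<forall>e\<in>E. \<exists>u v. u \<noteq> v \<and> e = {u,v} \<and> u \<in> V \<and> v \<in> V)"

lemma confl_edge:
  assumes "\<forall>u a v b. R u a v b \<longrightarrow> R v b u a" "u \<noteq> v"
  shows "confl R c {u,v} \<longleftrightarrow> R u (c u) v (c v)"
  using assms unfolding confl_def by (auto simp: doubleton_eq_iff)

lemma finite_Bs: "finite V \<Longrightarrow> \<forall>u\<in>V. finite (X u) \<Longrightarrow> finite (Bs V X R F)"
  unfolding Bs_def by (rule finite_subset[of _ "PiE V X"]) (auto intro: finite_PiE)

lemma card_Bs_empty: "finite V \<Longrightarrow> msys V E m X R \<Longrightarrow> card (Bs V X R {}) = m ^ card V"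
  unfolding Bs_def msys_def by (simp add: card_PiE)

lemma card_Bs_mono: "finite V \<Longrightarrow> \<forall>u\<in>V. finite (X u) \<Longrightarrow> F' \<subseteq> F \<Longrightarrow> card (Bs V X R F) \<le> card (Bs V X R F')"
  by (rule card_mono[OF finite_Bs]) (auto simp: Bs_def)

lemma strip:
  assumes "finite V" "msys V E m X R" "F \<subseteq> E" "e \<in> F" "e = {u,v}" "u \<noteq> v" "u \<in> V" "v \<in> V"
    "\<forall>e'\<in>F. v \<in> e' \<longrightarrow> e' = e" "{u,v} \<in> E"
  shows "card (Bs V X R F) * m \<le> card (Bs V X R (F - {e}))"
    and "bsys V E m X R \<Longrightarrow> card (Bs V X R F) * m = card (Bs V X R (F - {e}))"
proof -
  have sym: "\<forall>u a v b. R u a v b \<longrightarrow> R v b u a" and fin: "\<forall>u\<in>V. finite (X u)"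
    and cv: "card (X v) = m"
    using assms(2,8) unfolding msys_def by auto
  have match: "\<And>a b b'. a \<in> X u \<Longrightarrow> b \<in> X v \<Longrightarrow> b' \<in> X v \<Longrightarrow> R u a v b \<Longrightarrow> R u a v b' \<Longrightarrow> b = b'"
    using assms(2,6,7,8,10) unfolding msys_def by blast
  define \<Phi> where "\<Phi> = (\<lambda>(c::'a\<Rightarrow>nat, a::nat). c(v := a))"
  have keep: "confl R (c(v:=a)) e' \<longleftrightarrow> confl R c e'" if "e' \<in> F - {e}" for c a e'
  proof -
    have "v \<notin> e'" using assms(9) that by blast
    then show ?thesis unfolding confl_def by (metis fun_upd_apply insertCI)
  qed
  have img: "\<Phi> ` (Bs V X R F \<times> X v) \<subseteq> Bs V X R (F - {e})"
  proof
    fix d assume "d \<in> \<Phi> ` (Bs V X R F \<times> X v)"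
    then obtain c a where c: "c \<in> Bs V X R F" "a \<in> X v" and d: "d = c(v:=a)"
      unfolding \<Phi>_def by auto
    have "d \<in> PiE V X" using c assms(8) unfolding d Bs_def by (auto simp: PiE_def extensional_def)
    moreover have "\<forall>e'\<in>F - {e}. confl R d e'" using c keep unfolding d Bs_def by auto
    ultimately show "d \<in> Bs V X R (F - {e})" unfolding Bs_def by auto
  qed
  have inj: "inj_on \<Phi> (Bs V X R F \<times> X v)"
  proof (rule inj_onI)
    fix p q
    assume p: "p \<in> Bs V X R F \<times> X v" and q: "q \<in> Bs V X R F \<times> X v"
      and eqpq: "\<Phi> p = \<Phi> q"
    obtain c a c' a' where pq: "p = (c, a)" "q = (c', a')" by (cases p, cases q) auto
    have c: "(c, a) \<in> Bs V X R F \<times> X v" and c': "(c', a') \<in> Bs V X R F \<times> X v"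
      and eq: "\<Phi> (c, a) = \<Phi> (c', a')" using p q eqpq pq by auto
    have eq': "c(v:=a) = c'(v:=a')" using eq unfolding \<Phi>_def by simp
    hence aa: "a = a'" by (metis fun_upd_same)
    have off: "\<And>w. w \<noteq> v \<Longrightarrow> c w = c' w" using eq' by (metis fun_upd_other)
    have Ru: "R u (c u) v (c v)" "R u (c' u) v (c' v)"
      using c c' assms(4,5,6) confl_edge[OF sym assms(6)] unfolding Bs_def by auto
    have mem: "c u \<in> X u" "c v \<in> X v" "c' v \<in> X v"
      using c c' assms(7,8) unfolding Bs_def by auto
    have "c v = c' v" using match[OF mem(1) mem(2) mem(3)] Ru off[OF assms(6)] by simp
    hence "c = c'" using off by (metis ext)
    thus "p = q" using aa pq by simp
  qed
  have fin2: "finite (Bs V X R (F - {e}))" using finite_Bs[OF assms(1) fin] .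
  have cardprod: "card (Bs V X R F \<times> X v) = card (Bs V X R F) * m"
    using cv by (simp add: card_cartesian_product)
  show "card (Bs V X R F) * m \<le> card (Bs V X R (F - {e}))"
    using card_inj_on_le[OF inj img fin2] cardprod by simp
  assume bs: "bsys V E m X R"
  have "Bs V X R (F - {e}) \<subseteq> \<Phi> ` (Bs V X R F \<times> X v)"
  proof
    fix d assume d: "d \<in> Bs V X R (F - {e})"
    have du: "d u \<in> X u" using d assms(7) unfolding Bs_def by auto
    obtain b where b: "b \<in> X v" "R u (d u) v b"
      using bs du assms(6,7,8,10) unfolding bsys_def by blast
    define c where "c = d(v:=b)"
    have "c \<in> PiE V X" using d b assms(8) unfolding c_def Bs_def by (auto simp: PiE_def extensional_def)
    moreover have "confl R c e"
      unfolding assms(5) using confl_edge[OF sym assms(6)] b assms(6) by (simp add: c_def)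
    moreover have "\<forall>e'\<in>F - {e}. confl R c e'" using keep d unfolding c_def Bs_def by auto
    ultimately have "c \<in> Bs V X R F" unfolding Bs_def by auto
    moreover have "d = \<Phi> (c, d v)" unfolding \<Phi>_def c_def by simp
    moreover have "d v \<in> X v" using d assms(8) unfolding Bs_def by auto
    ultimately show "d \<in> \<Phi> ` (Bs V X R F \<times> X v)" by blast
  qed
  hence "Bs V X R (F - {e}) = \<Phi> ` (Bs V X R F \<times> X v)" using img by blast
  hence "card (Bs V X R (F - {e})) = card (Bs V X R F \<times> X v)"
    using card_image[OF inj] by simp
  thus "card (Bs V X R F) * m = card (Bs V X R (F - {e}))" using cardprod by simp
qed


definition pe :: "'a list \<Rightarrow> 'a set set" where
  "pe vs = {{vs!i, vs!Suc i} | i. Suc i < length vs}"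

definition ce :: "'a list \<Rightarrow> 'a set set" where
  "ce vs = {{vs!i, vs!(Suc i mod length vs)} | i. i < length vs}"

lemma pe_snoc: "xs \<noteq> [] \<Longrightarrow> pe (xs @ [x]) = insert {last xs, x} (pe xs)"
proof -
  assume ne: "xs \<noteq> []"
  have lx: "last xs = xs ! (length xs - 1)" using ne by (simp add: last_conv_nth)
  show ?thesis
  proof (rule set_eqI, rule iffI)
    fix e assume "e \<in> pe (xs @ [x])"
    then obtain i where i: "Suc i < Suc (length xs)" "e = {(xs@[x])!i, (xs@[x])!Suc i}"
      unfolding pe_def by auto
    show "e \<in> insert {last xs, x} (pe xs)"
    proof (cases "Suc i < length xs")
      case True
      then show ?thesis using i unfolding pe_def by (auto simp: nth_append)
    next
      case False
      then have "i = length xs - 1" using i by auto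
      then show ?thesis using i ne lx by (auto simp: nth_append)
    qed
  next
    fix e assume "e \<in> insert {last xs, x} (pe xs)"
    then show "e \<in> pe (xs @ [x])"
    proof
      assume "e = {last xs, x}"
      then have "e = {(xs@[x])!(length xs - 1), (xs@[x])!Suc (length xs - 1)}"
        using ne lx by (auto simp: nth_append)
      then show ?thesis unfolding pe_def using ne by (intro CollectI exI[of _ "length xs - 1"]) auto
    next
      assume "e \<in> pe xs"
      then obtain i where "Suc i < length xs" "e = {xs!i, xs!Suc i}" unfolding pe_def by auto
      then show ?thesis unfolding pe_def by (auto simp: nth_append intro!: exI[of _ i])
    qed
  qed
qed

lemma pe_mem: "e \<in> pe xs \<Longrightarrow> x \<in> e \<Longrightarrow> x \<in> set xs"
  unfolding pe_def by (auto)

lemma pe_sub_ce: "pe xs \<subseteq> ce xs"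
proof
  fix e assume "e \<in> pe xs"
  then obtain i where "Suc i < length xs" "e = {xs!i, xs!Suc i}" unfolding pe_def by auto
  then show "e \<in> ce xs" unfolding ce_def by (auto intro!: exI[of _ i])
qed

lemma pe_Nil_single: "length xs \<le> 1 \<Longrightarrow> pe xs = {}"
  unfolding pe_def by auto

lemma path_bound:
  assumes "finite V" "msys V E m X R" "distinct vs" "set vs \<subseteq> V" "vs \<noteq> []" "pe vs \<subseteq> E"
  shows "card (Bs V X R (pe vs)) * m ^ (length vs - 1) \<le> m ^ card V \<and>
         (bsys V E m X R \<longrightarrow> card (Bs V X R (pe vs)) * m ^ (length vs - 1) = m ^ card V)"
  using assms(3-6)
proof (induction vs rule: rev_induct)
  case Nil
  then show ?case by simp
next
  case (snoc x xs)
  show ?case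
  proof (cases "xs = []")
    case True
    then show ?thesis using card_Bs_empty[OF assms(1,2)] by (simp add: pe_Nil_single)
  next
    case False
    have IH: "card (Bs V X R (pe xs)) * m ^ (length xs - 1) \<le> m ^ card V \<and>
         (bsys V E m X R \<longrightarrow> card (Bs V X R (pe xs)) * m ^ (length xs - 1) = m ^ card V)"
      using snoc False pe_snoc[OF False, of x] by auto
    have xn: "x \<notin> set xs" using snoc by auto
    have peq: "pe (xs @ [x]) = insert {last xs, x} (pe xs)" using pe_snoc[OF False] .
    have notin: "{last xs, x} \<notin> pe xs" using pe_mem[of "{last xs, x}" xs x] xn by auto
    have rem: "pe (xs @ [x]) - {{last xs, x}} = pe xs" using peq notin by auto
    have lx: "last xs \<in> set xs" using False by simp
    have ne: "last xs \<noteq> x" using lx xn by auto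
    have leaf: "\<forall>e'\<in>pe (xs @ [x]). x \<in> e' \<longrightarrow> e' = {last xs, x}"
    proof (intro ballI impI)
      fix e' assume "e' \<in> pe (xs @ [x])" "x \<in> e'"
      then show "e' = {last xs, x}" using peq pe_mem[of e' xs x] xn by auto
    qed
    have st: "card (Bs V X R (pe (xs@[x]))) * m \<le> card (Bs V X R (pe xs))"
         "bsys V E m X R \<Longrightarrow> card (Bs V X R (pe (xs@[x]))) * m = card (Bs V X R (pe xs))"
      using strip[OF assms(1,2) snoc.prems(4) _ refl ne _ _ leaf] peq rem snoc.prems lx by auto
    have len: "length (xs @ [x]) - 1 = Suc (length xs - 1)" using False by simp
    have "card (Bs V X R (pe (xs@[x]))) * m ^ (length (xs @ [x]) - 1)
        = card (Bs V X R (pe (xs@[x]))) * m * m ^ (length xs - 1)" unfolding len by simp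
    also have "\<dots> \<le> card (Bs V X R (pe xs)) * m ^ (length xs - 1)"
      using st(1) by (rule mult_right_mono) simp
    finally have 1: "card (Bs V X R (pe (xs@[x]))) * m ^ (length (xs @ [x]) - 1) \<le> m ^ card V"
      using IH by linarith
    have 2: "bsys V E m X R \<longrightarrow> card (Bs V X R (pe (xs@[x]))) * m ^ (length (xs @ [x]) - 1) = m ^ card V"
      using st(2) IH unfolding len by (metis mult.assoc power_Suc mult.commute)
    show ?thesis using 1 2 by blast
  qed
qed


lemma idsym: "\<forall>u a v b. (\<lambda>u (a::nat) v b. a = b) u a v b \<longrightarrow> (\<lambda>u a v b. a = b) v b u a"
  by auto

lemma ce_memI: "i < length vs \<Longrightarrow> {vs!i, vs!(Suc i mod length vs)} \<in> ce vs"
  unfolding ce_def by auto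

lemma pe_memI: "Suc i < length vs \<Longrightarrow> {vs!i, vs!Suc i} \<in> pe vs"
  unfolding pe_def by auto

lemma ce_card:
  assumes "distinct vs" "3 \<le> length vs"
  shows "card (ce vs) = length vs"
proof -
  let ?k = "length vs"
  let ?f = "\<lambda>i. {vs!i, vs!(Suc i mod ?k)}"
  have ceq: "ce vs = ?f ` {0..<?k}" unfolding ce_def by auto
  have modlem: "False" if "Suc i mod ?k = j" "Suc j mod ?k = i" "i < ?k" "j < ?k" for i j
  proof (cases "Suc i < ?k")
    case True
    then have "j = Suc i" using that by simp
    show False
    proof (cases "Suc j < ?k")
      case True
      then show False using that \<open>j = Suc i\<close> by simp
    next
      case False
      then have "Suc j = ?k" using that by simp
      then have "i = 0" using that by simp
      then show False using \<open>Suc j = ?k\<close> \<open>j = Suc i\<close> assms(2) by simp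
    qed
  next
    case False
    then have "Suc i = ?k" using that by simp
    then have "j = 0" using that by simp
    then have "i = Suc 0 mod ?k" using that by simp
    then show False using \<open>Suc i = ?k\<close> assms(2) by simp
  qed
  have "inj_on ?f {0..<?k}"
  proof (rule inj_onI)
    fix i j assume ij: "i \<in> {0..<?k}" "j \<in> {0..<?k}" "?f i = ?f j"
    have kp: "0 < ?k" using assms(2) by linarith
    have ilt: "Suc i mod ?k < ?k" "Suc j mod ?k < ?k" using kp by simp_all
    show "i = j"
    proof (cases "vs!i = vs!j")
      case True
      then show ?thesis using ij assms(1) nth_eq_iff_index_eq by auto
    next
      case False
      then have "vs!i = vs!(Suc j mod ?k)" "vs!(Suc i mod ?k) = vs!j" using ij(3) by (auto simp: doubleton_eq_iff)
      then have "i = Suc j mod ?k" "Suc i mod ?k = j"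
        using ij ilt assms(1) nth_eq_iff_index_eq by auto
      then show ?thesis using modlem ij by auto
    qed
  qed
  then show ?thesis unfolding ceq by (simp add: card_image)
qed

lemma ce_insert:
  assumes "2 \<le> length vs"
  shows "ce vs = insert {vs!(length vs - 1), vs!0} (pe vs)"
proof (rule set_eqI, rule iffI)
  fix e assume "e \<in> ce vs"
  then obtain i where i: "i < length vs" "e = {vs!i, vs!(Suc i mod length vs)}" unfolding ce_def by auto
  show "e \<in> insert {vs!(length vs - 1), vs!0} (pe vs)"
  proof (cases "Suc i < length vs")
    case True
    then show ?thesis using i unfolding pe_def by auto
  next
    case False
    then have si: "Suc i = length vs" using i by simp
    then have "Suc i mod length vs = 0" by simp
    moreover have "i = length vs - 1" using si by simp
    ultimately show ?thesis using i by simp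
  qed
next
  fix e assume "e \<in> insert {vs!(length vs - 1), vs!0} (pe vs)"
  then show "e \<in> ce vs"
  proof
    assume e: "e = {vs!(length vs - 1), vs!0}"
    have s1: "Suc (length vs - 1) = length vs" using assms by simp
    have "{vs!(length vs - 1), vs!(Suc (length vs - 1) mod length vs)} \<in> ce vs"
      using assms by (intro ce_memI) simp
    then show ?thesis unfolding e s1 by simp
  next
    assume "e \<in> pe vs"
    then show ?thesis using pe_sub_ce by auto
  qed
qed

lemma Bs_ce_pe_id:
  assumes "distinct vs" "2 \<le> length vs"
  shows "Bs V X (\<lambda>u a v b. a = b) (ce vs) = Bs V X (\<lambda>u a v b. a = b) (pe vs)"
proof
  show "Bs V X (\<lambda>u a v b. a = b) (ce vs) \<subseteq> Bs V X (\<lambda>u a v b. a = b) (pe vs)"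
    using pe_sub_ce unfolding Bs_def by auto
next
  show "Bs V X (\<lambda>u a v b. a = b) (pe vs) \<subseteq> Bs V X (\<lambda>u a v b. a = b) (ce vs)"
  proof
    fix c assume c: "c \<in> Bs V X (\<lambda>u a v b. a = b) (pe vs)"
    have step: "c (vs!Suc i) = c (vs!i)" if "Suc i < length vs" for i
    proof -
      have "{vs!i, vs!Suc i} \<in> pe vs" using that unfolding pe_def by auto
      then have "confl (\<lambda>u a v b. a = b) c {vs!i, vs!Suc i}" using c unfolding Bs_def by auto
      moreover have ne: "vs!i \<noteq> vs!Suc i" using assms(1) that nth_eq_iff_index_eq[OF assms(1), of i "Suc i"] by simp
      ultimately show ?thesis using confl_edge[OF idsym ne] by simp
    qed
    have all: "i < length vs \<Longrightarrow> c (vs!i) = c (vs!0)" for i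
    proof (induction i)
      case 0 then show ?case by simp
    next
      case (Suc i) then show ?case using step by simp
    qed
    have ne: "vs!(length vs - 1) \<noteq> vs!0" using assms nth_eq_iff_index_eq[OF assms(1), of "length vs - 1" 0] by (cases vs) auto
    have "confl (\<lambda>u a v b. a = b) c {vs!(length vs - 1), vs!0}"
      using confl_edge[OF idsym ne] all[of "length vs - 1"] assms(2) by simp
    then show "c \<in> Bs V X (\<lambda>u a v b. a = b) (ce vs)"
      using c ce_insert[OF assms(2)] unfolding Bs_def by auto
  qed
qed

lemma chord_aux:
  assumes "distinct vs" "set vs \<subseteq> verts G" "ce vs \<subseteq> edges G" "i < j" "j < length vs"
    "{vs!i, vs!j} \<in> edges G" "{vs!i, vs!j} \<notin> ce vs"
  shows "\<exists>k'<length vs. has_cycle G k'"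
proof -
  let ?k = "length vs"
  define ws where "ws = drop i (take (Suc j) vs)"
  have lw: "length ws = Suc j - i" using assms unfolding ws_def by simp
  have wn: "t < Suc j - i \<Longrightarrow> ws!t = vs!(i+t)" for t using assms unfolding ws_def by simp
  have j1: "j \<noteq> Suc i"
  proof
    assume "j = Suc i"
    then have "{vs!i, vs!j} = {vs!i, vs!(Suc i mod ?k)}" using assms by simp
    then show False using assms(4,5,7) unfolding ce_def by auto
  qed
  have j2: "\<not> (i = 0 \<and> j = ?k - 1)"
  proof
    assume h: "i = 0 \<and> j = ?k - 1"
    have sj: "Suc j = ?k" using h assms(5) by simp
    have "{vs!j, vs!(Suc j mod ?k)} \<in> ce vs" using assms(5) by (rule ce_memI)
    then have "{vs!i, vs!j} \<in> ce vs" using h sj by (simp add: insert_commute)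
    then show False using assms by simp
  qed
  have "has_cycle G (Suc j - i)"
    unfolding has_cycle_def
  proof (intro conjI exI[of _ ws])
    show "3 \<le> Suc j - i" using j1 assms by simp
    show "length ws = Suc j - i" by (rule lw)
    show "distinct ws" using assms(1) unfolding ws_def by simp
    show "set ws \<subseteq> verts G" using assms(2) set_drop_subset[of i "take (Suc j) vs"] set_take_subset[of "Suc j" vs] unfolding ws_def by blast
    show "\<forall>t<Suc j - i. {ws ! t, ws ! ((t + 1) mod (Suc j - i))} \<in> edges G"
    proof (intro allI impI)
      fix t assume t: "t < Suc j - i"
      show "{ws ! t, ws ! ((t + 1) mod (Suc j - i))} \<in> edges G"
      proof (cases "Suc t < Suc j - i")
        case True
        then have "(t+1) mod (Suc j - i) = Suc t" by simp
        moreover have "{vs!(i+t), vs!(Suc (i+t) mod ?k)} \<in> ce vs" using True assms(5) by (intro ce_memI) simp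
        moreover have "Suc (i+t) mod ?k = Suc (i+t)" using True assms(5) by simp
        ultimately show ?thesis using wn[OF t] wn[OF True] assms(3) by auto
      next
        case False
        then have st: "Suc t = Suc j - i" using t by simp
        then have "(t+1) mod (Suc j - i) = 0" by simp
        moreover have "t = j - i" using st assms(4) by arith
        ultimately
        show ?thesis using wn[OF t] wn[of 0] assms(4,6) by (simp add: insert_commute)
      qed
    qed
  qed
  moreover have "Suc j - i < ?k" using j2 assms by auto
  ultimately show ?thesis by blast
qed

lemma chord:
  assumes "distinct vs" "set vs \<subseteq> verts G" "ce vs \<subseteq> edges G" "x \<in> set vs" "y \<in> set vs" "x \<noteq> y"
    "{x, y} \<in> edges G" "{x, y} \<notin> ce vs"
  shows "\<exists>k'<length vs. has_cycle G k'"
proof -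
  obtain i j where ij: "i < length vs" "j < length vs" "x = vs!i" "y = vs!j"
    using assms(4,5) by (auto simp: in_set_conv_nth)
  have "i \<noteq> j" using ij assms(6) by auto
  then show ?thesis
  proof (cases "i < j")
    case True
    then show ?thesis using chord_aux[OF assms(1,2,3) True ij(2)] assms(7,8) ij by simp
  next
    case False
    then have "j < i" using \<open>i \<noteq> j\<close> by simp
    then show ?thesis using chord_aux[OF assms(1,2,3) \<open>j < i\<close> ij(1)] assms(7,8) ij by (simp add: insert_commute)
  qed
qed

lemma leafless_cycle:
  assumes "gwf V E" "F \<subseteq> E" "F \<noteq> {}"
    "\<forall>e\<in>F. \<forall>u v. e = {u,v} \<longrightarrow> u \<noteq> v \<longrightarrow> (\<exists>e'\<in>F. v \<in> e' \<and> e' \<noteq> e)"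
  shows "\<exists>vs. distinct vs \<and> set vs \<subseteq> V \<and> 3 \<le> length vs \<and> ce vs \<subseteq> F"
proof -
  have finV: "finite V" using assms(1) unfolding gwf_def by simp
  have edg: "\<And>e. e \<in> F \<Longrightarrow> \<exists>u v. u \<noteq> v \<and> e = {u,v} \<and> u \<in> V \<and> v \<in> V"
    using assms(1,2) unfolding gwf_def by blast
  define Q where "Q = (\<lambda>l. \<exists>vs. distinct vs \<and> set vs \<subseteq> V \<and> 2 \<le> length vs \<and> pe vs \<subseteq> F \<and> length vs = l)"
  obtain e0 where "e0 \<in> F" using assms(3) by blast
  then obtain u0 v0 where uv0: "u0 \<noteq> v0" "e0 = {u0,v0}" "u0 \<in> V" "v0 \<in> V" using edg by blast
  have "pe [u0, v0] = {{u0, v0}}" unfolding pe_def by auto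
  then have "Q 2" unfolding Q_def using uv0 \<open>e0 \<in> F\<close> by (intro exI[of _ "[u0,v0]"]) auto
  moreover have "\<forall>l. Q l \<longrightarrow> l \<le> card V"
  proof (intro allI impI)
    fix l assume "Q l"
    then obtain vs where "distinct vs" "set vs \<subseteq> V" "length vs = l" unfolding Q_def by blast
    then show "l \<le> card V" using card_mono[OF finV, of "set vs"] distinct_card[of vs] by simp
  qed
  ultimately obtain k where "Q k" and kmax: "\<forall>l. Q l \<longrightarrow> l \<le> k" using Nat.ex_has_greatest_nat[of Q 2 "card V"] by blast
  then obtain vs where vs: "distinct vs" "set vs \<subseteq> V" "2 \<le> length vs" "pe vs \<subseteq> F" "length vs = k"
    unfolding Q_def by blast
  define p where "p = vs!(k-2)"
  define v where "v = vs!(k-1)"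
  have s2: "Suc (k-2) = k-1" using vs by simp
  have "{vs!(k-2), vs!Suc (k-2)} \<in> pe vs" using vs s2 by (intro pe_memI) simp
  then have pv: "{p, v} \<in> pe vs" unfolding p_def v_def using s2 by simp
  have pnv: "p \<noteq> v" unfolding p_def v_def using vs nth_eq_iff_index_eq[OF vs(1), of "k-2" "k-1"] by simp
  obtain e' where e': "e' \<in> F" "v \<in> e'" "e' \<noteq> {p,v}" using assms(4) pv vs(4) pnv by blast
  obtain a b where ab: "a \<noteq> b" "e' = {a,b}" "a \<in> V" "b \<in> V" using edg[OF e'(1)] by blast
  obtain w where w: "e' = {v,w}" "w \<noteq> v" "w \<in> V"
  proof (cases "v = a")
    case True then show ?thesis using ab that[of b] by simp
  next
    case False then have "v = b" using ab e'(2) by simp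
    then show ?thesis using ab that[of a] by (simp add: insert_commute)
  qed
  have wp: "w \<noteq> p" using w e'(3) by (auto simp: insert_commute)
  show ?thesis
  proof (cases "w \<in> set vs")
    case False
    have ne: "vs \<noteq> []" using vs by auto
    have "last vs = v" unfolding v_def using ne vs(5) by (simp add: last_conv_nth)
    then have "pe (vs @ [w]) \<subseteq> F" using pe_snoc[OF ne, of w] vs(4) e' w by auto
    then have "Q (Suc k)" unfolding Q_def using vs False w by (intro exI[of _ "vs @ [w]"]) auto
    then have "Suc k \<le> k" using kmax by blast
    then show ?thesis by simp
  next
    case True
    then obtain i where i: "i < k" "w = vs!i" using vs(5) by (auto simp: in_set_conv_nth)
    have "i \<noteq> k - 1" using i w v_def by auto
    moreover have "i \<noteq> k - 2" using i wp p_def by auto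
    ultimately have ik: "i + 2 < k" using i by auto
    define ws where "ws = drop i vs"
    have lw: "length ws = k - i" unfolding ws_def using vs by simp
    have wn: "t < k - i \<Longrightarrow> ws!t = vs!(i+t)" for t unfolding ws_def using vs by simp
    have "ce ws \<subseteq> F"
    proof
      fix e assume "e \<in> ce ws"
      then obtain t where t: "t < k - i" "e = {ws!t, ws!(Suc t mod (k - i))}" unfolding ce_def lw by auto
      show "e \<in> F"
      proof (cases "Suc t < k - i")
        case True
        then have "e = {vs!(i+t), vs!Suc (i+t)}" using t wn by simp
        moreover have "Suc (i+t) < length vs" using True vs(5) by simp
        ultimately have "e \<in> pe vs" using pe_memI by simp
        then show ?thesis using vs(4) by blast
      next
        case False
        then have st: "Suc t = k - i" using t by simp
        then have "Suc t mod (k - i) = 0" by simp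
        moreover have "i + t = k - 1" using st ik by arith
        ultimately have "e = {v, w}" using t wn[OF t(1)] wn[of 0] ik unfolding v_def i(2) by auto
        then show ?thesis using w e' by simp
      qed
    qed
    moreover have "distinct ws" unfolding ws_def using vs by simp
    moreover have "set ws \<subseteq> V" using set_drop_subset[of i vs] vs(2) unfolding ws_def by blast
    moreover have "3 \<le> length ws" using lw ik by simp
    ultimately show ?thesis by blast
  qed
qed


definition classA :: "'a set \<Rightarrow> 'a set set \<Rightarrow> nat \<Rightarrow> 'a set set \<Rightarrow> bool" where
  "classA V E m F \<longleftrightarrow> (\<forall>X R. bsys V E m X R \<longrightarrow> card (Bs V X R F) * m ^ card F = m ^ card V)"

definition classB :: "'a set \<Rightarrow> 'a set set \<Rightarrow> nat \<Rightarrow> nat \<Rightarrow> 'a set set \<Rightarrow> bool" where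
  "classB V E m g F \<longleftrightarrow> card F = g \<and> (\<forall>X R. msys V E m X R \<longrightarrow> card (Bs V X R F) * m ^ (g - 1) \<le> m ^ card V) \<and>
     card (Bs V (\<lambda>_. {1..m}) (\<lambda>u a v b. a = b) F) * m ^ (g - 1) = m ^ card V"

definition classC :: "'a set \<Rightarrow> 'a set set \<Rightarrow> nat \<Rightarrow> nat \<Rightarrow> 'a set set \<Rightarrow> bool" where
  "classC V E m g F \<longleftrightarrow> (\<forall>X R. msys V E m X R \<longrightarrow> card (Bs V X R F) * m ^ g \<le> m ^ card V)"

lemma id_bsys: "bsys V E m (\<lambda>_. {1..m}) (\<lambda>u a v b. a = b)"
  unfolding bsys_def msys_def by auto

lemma wf_gwf: "wf_graph G \<Longrightarrow> gwf (verts G) (edges G)"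
  unfolding wf_graph_def gwf_def by simp

lemma finite_edges: "wf_graph G \<Longrightarrow> finite (edges G)"
proof -
  assume w: "wf_graph G"
  have "edges G \<subseteq> Pow (verts G)"
  proof
    fix e assume "e \<in> edges G"
    then obtain x y where "e = {x,y}" "x \<in> verts G" "y \<in> verts G" using w unfolding wf_graph_def by blast
    then show "e \<in> Pow (verts G)" by simp
  qed
  moreover have "finite (Pow (verts G))" using w unfolding wf_graph_def by simp
  ultimately show ?thesis by (rule finite_subset)
qed

lemma classify:
  assumes G: "wf_graph G" and m: "1 \<le> m" and g: "1 \<le> g" and cyc: "\<forall>k. has_cycle G k \<longrightarrow> g \<le> k"
  shows "F \<subseteq> edges G \<Longrightarrow> classA (verts G) (edges G) m F \<or> classB (verts G) (edges G) m g F \<or> classC (verts G) (edges G) m g F"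
proof (induction "card F" arbitrary: F rule: less_induct)
  case less
  let ?V = "verts G" and ?E = "edges G"
  have finV: "finite ?V" using G unfolding wf_graph_def by simp
  have gw: "gwf ?V ?E" using wf_gwf[OF G] .
  have finF: "finite F" using finite_subset[OF less.prems finite_edges[OF G]] .
  have edg: "\<And>e. e \<in> ?E \<Longrightarrow> \<exists>u v. u \<noteq> v \<and> e = {u,v} \<and> u \<in> ?V \<and> v \<in> ?V"
    using G unfolding wf_graph_def by blast
  have mfin: "\<And>X R. msys ?V ?E m X R \<Longrightarrow> \<forall>u\<in>?V. finite (X u)" unfolding msys_def by blast
  have mpos: "0 < m" using m by simp
  show ?case
  proof (cases "F = {}")
    case True
    have "classA ?V ?E m F" unfolding classA_def True
      using card_Bs_empty[OF finV] unfolding bsys_def by auto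
    then show ?thesis by blast
  next
    case Fne: False
    show ?thesis
    proof (cases "\<exists>e\<in>F. \<exists>u v. e = {u,v} \<and> u \<noteq> v \<and> (\<forall>e'\<in>F. v \<in> e' \<longrightarrow> e' = e)")
      case True
      then obtain e u v where e: "e \<in> F" "e = {u,v}" "u \<noteq> v" and leaf: "\<forall>e'\<in>F. v \<in> e' \<longrightarrow> e' = e" by blast
      have eE: "e \<in> ?E" using e less.prems by blast
      have uvV: "u \<in> ?V" "v \<in> ?V" using edg[OF eE] e by (auto simp: doubleton_eq_iff)
      have "card F > 0" using finF e(1) card_gt_0_iff by blast
      then have cF: "card F = Suc (card (F - {e}))" using finF e(1) by (simp add: card_Diff_singleton)
      have IH: "classA ?V ?E m (F - {e}) \<or> classB ?V ?E m g (F - {e}) \<or> classC ?V ?E m g (F - {e})"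
        using less.hyps[of "F - {e}"] cF less.prems by auto
      have st1: "\<And>X R. msys ?V ?E m X R \<Longrightarrow> card (Bs ?V X R F) * m \<le> card (Bs ?V X R (F - {e}))"
        using strip(1)[OF finV _ less.prems e(1,2,3) uvV leaf] eE e(2) by simp
      have st2: "\<And>X R. bsys ?V ?E m X R \<Longrightarrow> card (Bs ?V X R F) * m = card (Bs ?V X R (F - {e}))"
        using strip(2)[OF finV _ less.prems e(1,2,3) uvV leaf] eE e(2) unfolding bsys_def by simp
      from IH show ?thesis
      proof (elim disjE)
        assume A: "classA ?V ?E m (F - {e})"
        have "classA ?V ?E m F" unfolding classA_def
        proof (intro allI impI)
          fix X R assume b: "bsys ?V ?E m X R"
          have "card (Bs ?V X R F) * m ^ card F = card (Bs ?V X R F) * m * m ^ card (F - {e})"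
            unfolding cF by simp
          also have "\<dots> = m ^ card ?V" using st2[OF b] A b unfolding classA_def by simp
          finally show "card (Bs ?V X R F) * m ^ card F = m ^ card ?V" .
        qed
        then show ?thesis by blast
      next
        assume B: "classB ?V ?E m g (F - {e})"
        have "classC ?V ?E m g F" unfolding classC_def
        proof (intro allI impI)
          fix X R assume b: "msys ?V ?E m X R"
          have "card (Bs ?V X R F) * m ^ g = card (Bs ?V X R F) * m * m ^ (g - 1)"
            using g by (cases g) auto
          also have "\<dots> \<le> card (Bs ?V X R (F - {e})) * m ^ (g - 1)"
            using st1[OF b] by (rule mult_right_mono) simp
          also have "\<dots> \<le> m ^ card ?V" using B b unfolding classB_def by blast
          finally show "card (Bs ?V X R F) * m ^ g \<le> m ^ card ?V" .
        qed
        then show ?thesis by blast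
      next
        assume C: "classC ?V ?E m g (F - {e})"
        have "classC ?V ?E m g F" unfolding classC_def
        proof (intro allI impI)
          fix X R assume b: "msys ?V ?E m X R"
          have "card (Bs ?V X R F) * m ^ g \<le> card (Bs ?V X R F) * m * m ^ g"
            using mpos by simp
          also have "\<dots> \<le> card (Bs ?V X R (F - {e})) * m ^ g"
            using st1[OF b] by (rule mult_right_mono) simp
          also have "\<dots> \<le> m ^ card ?V" using C b unfolding classC_def by blast
          finally show "card (Bs ?V X R F) * m ^ g \<le> m ^ card ?V" .
        qed
        then show ?thesis by blast
      qed
    next
      case False
      have nl: "\<forall>e\<in>F. \<forall>u v. e = {u,v} \<longrightarrow> u \<noteq> v \<longrightarrow> (\<exists>e'\<in>F. v \<in> e' \<and> e' \<noteq> e)"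
        using False by blast
      obtain vs where vs: "distinct vs" "set vs \<subseteq> ?V" "3 \<le> length vs" "ce vs \<subseteq> F"
        using leafless_cycle[OF gw less.prems Fne nl] by blast
      let ?k = "length vs"
      have "has_cycle G ?k" unfolding has_cycle_def
      proof (intro conjI exI[of _ vs])
        show "\<forall>i<?k. {vs ! i, vs ! ((i + 1) mod ?k)} \<in> ?E"
          using ce_memI[of _ vs] vs(4) less.prems by auto
      qed (use vs in auto)
      then have gk: "g \<le> ?k" using cyc by blast
      have peF: "pe vs \<subseteq> F" using pe_sub_ce vs(4) by blast
      have peE: "pe vs \<subseteq> ?E" using peF less.prems by blast
      have vsne: "vs \<noteq> []" using vs(3) by auto
      have pb: "\<And>X R. msys ?V ?E m X R \<Longrightarrow> card (Bs ?V X R (pe vs)) * m ^ (?k - 1) \<le> m ^ card ?V"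
        using path_bound[OF finV _ vs(1,2) vsne peE] by blast
      have pbe: "\<And>X R. bsys ?V ?E m X R \<Longrightarrow> card (Bs ?V X R (pe vs)) * m ^ (?k - 1) = m ^ card ?V"
        using path_bound[OF finV _ vs(1,2) vsne peE] unfolding bsys_def by blast
      have monoF: "\<And>X R F'. msys ?V ?E m X R \<Longrightarrow> F' \<subseteq> F \<Longrightarrow> card (Bs ?V X R F) \<le> card (Bs ?V X R F')"
        using card_Bs_mono[OF finV] mfin by blast
      show ?thesis
      proof (cases "g < ?k")
        case True
        have "classC ?V ?E m g F" unfolding classC_def
        proof (intro allI impI)
          fix X R assume b: "msys ?V ?E m X R"
          have "card (Bs ?V X R F) * m ^ g \<le> card (Bs ?V X R (pe vs)) * m ^ g"
            using monoF[OF b peF] by simp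
          also have "\<dots> \<le> card (Bs ?V X R (pe vs)) * m ^ (?k - 1)"
            using True m by (intro mult_left_mono power_increasing) auto
          also have "\<dots> \<le> m ^ card ?V" using pb[OF b] .
          finally show "card (Bs ?V X R F) * m ^ g \<le> m ^ card ?V" .
        qed
        then show ?thesis by blast
      next
        case False
        then have kg: "?k = g" using gk by simp
        show ?thesis
        proof (cases "F = ce vs")
          case True
          have "classB ?V ?E m g F" unfolding classB_def
          proof (intro conjI allI impI)
            show "card F = g" using True ce_card[OF vs(1,3)] kg by simp
          next
            fix X R assume b: "msys ?V ?E m X R"
            have "card (Bs ?V X R F) * m ^ (g - 1) \<le> card (Bs ?V X R (pe vs)) * m ^ (g - 1)"
              using monoF[OF b peF] by simp
            also have "\<dots> \<le> m ^ card ?V" using pb[OF b] kg by simp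
            finally show "card (Bs ?V X R F) * m ^ (g - 1) \<le> m ^ card ?V" .
          next
            have "Bs ?V (\<lambda>_. {1..m}) (\<lambda>u a v b. a = b) F = Bs ?V (\<lambda>_. {1..m}) (\<lambda>u a v b. a = b) (pe vs)"
              unfolding True using Bs_ce_pe_id[OF vs(1)] vs(3) by simp
            then show "card (Bs ?V (\<lambda>_. {1..m}) (\<lambda>u a v b. a = b) F) * m ^ (g - 1) = m ^ card ?V"
              using pbe[OF id_bsys] kg by simp
          qed
          then show ?thesis by blast
        next
          case False
          then obtain e' where e': "e' \<in> F" "e' \<notin> ce vs" using vs(4) by blast
          have e'E: "e' \<in> ?E" using e' less.prems by blast
          obtain x y where xy: "x \<noteq> y" "e' = {x,y}" "x \<in> ?V" "y \<in> ?V" using edg[OF e'E] by blast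
          have "\<not> (x \<in> set vs \<and> y \<in> set vs)"
          proof
            assume "x \<in> set vs \<and> y \<in> set vs"
            then obtain k' where "k' < ?k" "has_cycle G k'"
              using chord[OF vs(1,2) _ _ _ xy(1)] vs(4) less.prems e'E e'(2) xy(2) by blast
            then show False using cyc kg by fastforce
          qed
          then obtain z w where zw: "e' = {z,w}" "z \<noteq> w" "z \<in> ?V" "w \<in> ?V" "w \<notin> set vs"
            using xy by (metis insert_commute)
          define F' where "F' = insert e' (pe vs)"
          have F'F: "F' \<subseteq> F" unfolding F'_def using e' peF by blast
          have F'E: "F' \<subseteq> ?E" using F'F less.prems by blast
          have e'pe: "e' \<notin> pe vs" using e'(2) pe_sub_ce by blast
          have rem: "F' - {e'} = pe vs" unfolding F'_def using e'pe by auto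
          have leaf': "\<forall>e''\<in>F'. w \<in> e'' \<longrightarrow> e'' = e'"
          proof (intro ballI impI)
            fix e'' assume "e'' \<in> F'" "w \<in> e''"
            then show "e'' = e'" unfolding F'_def using pe_mem[of e'' vs w] zw(5) by auto
          qed
          have st: "\<And>X R. msys ?V ?E m X R \<Longrightarrow> card (Bs ?V X R F') * m \<le> card (Bs ?V X R (pe vs))"
            using strip(1)[OF finV _ F'E _ zw(1,2,3,4) leaf'] rem e'E zw(1) unfolding F'_def by simp
          have "classC ?V ?E m g F" unfolding classC_def
          proof (intro allI impI)
            fix X R assume b: "msys ?V ?E m X R"
            have "card (Bs ?V X R F) * m ^ g \<le> card (Bs ?V X R F') * m ^ g"
              using monoF[OF b F'F] by simp
            also have "\<dots> = card (Bs ?V X R F') * m * m ^ (g - 1)"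
              using g by (cases g) auto
            also have "\<dots> \<le> card (Bs ?V X R (pe vs)) * m ^ (g - 1)"
              using st[OF b] by (rule mult_right_mono) simp
            also have "\<dots> \<le> m ^ card ?V" using pb[OF b] kg by simp
            finally show "card (Bs ?V X R F) * m ^ g \<le> m ^ card ?V" .
          qed
          then show ?thesis by blast
        qed
      qed
    qed
  qed
qed


lemma prod_of_bool_int: "finite F \<Longrightarrow> (\<Prod>e\<in>F. (of_bool (P e) :: int)) = of_bool (\<forall>e\<in>F. P e)"
  by (induction F rule: finite_induct) auto

lemma prod_neg: "(\<Prod>e\<in>F. - (x e :: int)) = (-1) ^ card F * (\<Prod>e\<in>F. x e)"
proof -
  have "(\<Prod>e\<in>F. - x e) = (\<Prod>e\<in>F. (-1) * x e)" by simp
  also have "\<dots> = (\<Prod>e\<in>F. (-1::int)) * (\<Prod>e\<in>F. x e)" by (rule prod.distrib)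
  also have "\<dots> = (-1) ^ card F * (\<Prod>e\<in>F. x e)" by simp
  finally show ?thesis .
qed

lemma expand:
  assumes "finite V" "\<forall>u\<in>V. finite (X u)" "finite E"
  shows "int (card (Ns V X R E)) = (\<Sum>F\<in>Pow E. (-1) ^ card F * int (card (Bs V X R F)))"
proof -
  let ?C = "PiE V X"
  have finC: "finite ?C" using assms by (auto intro: finite_PiE)
  have "int (card (Ns V X R E)) = (\<Sum>c\<in>?C. (of_bool (\<forall>e\<in>E. \<not> confl R c e) :: int))"
    using finC unfolding Ns_def by (simp add: Int_def)
  also have "\<dots> = (\<Sum>c\<in>?C. \<Prod>e\<in>E. ((- of_bool (confl R c e)) + 1 :: int))"
  proof (rule sum.cong[OF refl])
    fix c
    have "(\<Prod>e\<in>E. ((- of_bool (confl R c e)) + 1 :: int)) = (\<Prod>e\<in>E. of_bool (\<not> confl R c e))"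
      by (rule prod.cong) auto
    then show "(of_bool (\<forall>e\<in>E. \<not> confl R c e) :: int) = (\<Prod>e\<in>E. ((- of_bool (confl R c e)) + 1 :: int))"
      using prod_of_bool_int[OF assms(3)] by simp
  qed
  also have "\<dots> = (\<Sum>c\<in>?C. \<Sum>F\<in>Pow E. (-1) ^ card F * (\<Prod>e\<in>F. (of_bool (confl R c e) :: int)))"
  proof (rule sum.cong[OF refl])
    fix c
    show "(\<Prod>e\<in>E. ((- of_bool (confl R c e)) + 1 :: int)) = (\<Sum>F\<in>Pow E. (-1) ^ card F * (\<Prod>e\<in>F. (of_bool (confl R c e) :: int)))"
    proof -
      have "(\<Prod>e\<in>E. ((- of_bool (confl R c e)) + 1 :: int)) = (\<Sum>F\<in>Pow E. (\<Prod>e\<in>F. - (of_bool (confl R c e) :: int)) * (\<Prod>e\<in>E - F. 1))"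
        by (rule prod_add[OF assms(3)])
      also have "\<dots> = (\<Sum>F\<in>Pow E. (-1) ^ card F * (\<Prod>e\<in>F. (of_bool (confl R c e) :: int)))"
        by (rule sum.cong[OF refl]) (simp only: prod_neg prod.neutral_const mult_1_right)
      finally show ?thesis .
    qed
  qed
  also have "\<dots> = (\<Sum>F\<in>Pow E. \<Sum>c\<in>?C. (-1) ^ card F * (\<Prod>e\<in>F. (of_bool (confl R c e) :: int)))"
    by (rule sum.swap)
  also have "\<dots> = (\<Sum>F\<in>Pow E. (-1) ^ card F * int (card (Bs V X R F)))"
  proof (rule sum.cong[OF refl])
    fix F assume "F \<in> Pow E"
    then have finF: "finite F" using assms(3) finite_subset by blast
    have "(\<Sum>c\<in>?C. (-1) ^ card F * (\<Prod>e\<in>F. (of_bool (confl R c e) :: int)))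
        = (-1) ^ card F * (\<Sum>c\<in>?C. (of_bool (\<forall>e\<in>F. confl R c e) :: int))"
      by (simp add: sum_distrib_left prod_of_bool_int[OF finF])
    also have "\<dots> = (-1) ^ card F * int (card (Bs V X R F))"
      using finC unfolding Bs_def by (simp add: Int_def)
    finally show "(\<Sum>c\<in>?C. (-1) ^ card F * (\<Prod>e\<in>F. (of_bool (confl R c e) :: int))) = (-1) ^ card F * int (card (Bs V X R F))" .
  qed
  finally show ?thesis .
qed

lemma real_le_powi:
  assumes "x * m ^ g \<le> m ^ n" "1 \<le> m"
  shows "real x \<le> real m powi (int n - int g)"
proof -
  have mp: "real m > 0" using assms(2) by simp
  have "real x * real m ^ g \<le> real m ^ n" using assms(1) by (metis of_nat_le_iff of_nat_mult of_nat_power)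
  then have "real x \<le> real m ^ n / real m ^ g" using mp by (simp add: field_simps)
  also have "\<dots> = real m powi (int n - int g)" using mp by (simp add: power_int_diff)
  finally show ?thesis .
qed

lemma main_bound:
  assumes G: "wf_graph G" and godd: "odd g" and cyc: "\<forall>k. has_cycle G k \<longrightarrow> g \<le> k"
    and m: "1 \<le> m" and b: "bsys (verts G) (edges G) m X R"
  shows "real (card (Ns (verts G) (\<lambda>_. {1..m}) (\<lambda>u a v b. a = b) (edges G))) - real (card (Ns (verts G) X R (edges G)))
           \<le> 2 ^ card (edges G) * real m powi (int (card (verts G)) - int g)"
proof -
  let ?V = "verts G" and ?E = "edges G" and ?I = "\<lambda>_::'a. {1..m}" and ?Id = "\<lambda>(u::'a) (a::nat) (v::'a) b. a = b"
  let ?M = "real m powi (int (card ?V) - int g)"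
  have finV: "finite ?V" using G unfolding wf_graph_def by simp
  have finE: "finite ?E" using finite_edges[OF G] .
  have g1: "1 \<le> g" using godd by (cases g) auto
  have Mnn: "0 \<le> ?M" using m by simp
  have finX: "\<forall>u\<in>?V. finite (X u)" using b unfolding bsys_def msys_def by blast
  have ms: "msys ?V ?E m X R" using b unfolding bsys_def by blast
  have msi: "msys ?V ?E m ?I ?Id" using id_bsys unfolding bsys_def by blast
  have e1: "int (card (Ns ?V ?I ?Id ?E)) = (\<Sum>F\<in>Pow ?E. (-1) ^ card F * int (card (Bs ?V ?I ?Id F)))"
    using expand[OF finV _ finE] by simp
  have e2: "int (card (Ns ?V X R ?E)) = (\<Sum>F\<in>Pow ?E. (-1) ^ card F * int (card (Bs ?V X R F)))"
    using expand[OF finV finX finE] .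
  have tm: "real_of_int ((-1) ^ card F * (int (card (Bs ?V ?I ?Id F)) - int (card (Bs ?V X R F)))) \<le> ?M"
    if F: "F \<in> Pow ?E" for F
  proof -
    let ?a = "card (Bs ?V ?I ?Id F)" and ?b = "card (Bs ?V X R F)"
    have FE: "F \<subseteq> ?E" using F by blast
    have cl: "classA ?V ?E m F \<or> classB ?V ?E m g F \<or> classC ?V ?E m g F"
      using classify[OF G m g1 cyc FE] .
    then show ?thesis
    proof (elim disjE)
      assume A: "classA ?V ?E m F"
      have "?a * m ^ card F = ?b * m ^ card F" using A id_bsys b unfolding classA_def by metis
      then have "?a = ?b" using m by simp
      then show ?thesis using Mnn by simp
    next
      assume B: "classB ?V ?E m g F"
      have "?b * m ^ (g - 1) \<le> ?a * m ^ (g - 1)" using B ms unfolding classB_def by metis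
      then have ba: "?b \<le> ?a" using m by simp
      have "card F = g" using B unfolding classB_def by blast
      then have "(-1::int) ^ card F = -1" using godd by simp
      then have x: "real_of_int ((-1) ^ card F * (int ?a - int ?b)) = real ?b - real ?a" by simp
      have "real ?b \<le> real ?a" using ba by simp
      then show ?thesis using x Mnn by linarith
    next
      assume C: "classC ?V ?E m g F"
      have "real ?a \<le> ?M" using C msi m unfolding classC_def by (metis real_le_powi)
      moreover have "real ?b \<le> ?M" using C ms m unfolding classC_def by (metis real_le_powi)
      moreover have "(-1::int) ^ card F = 1 \<or> (-1::int) ^ card F = -1" by (simp add: minus_one_power_iff)
      ultimately show ?thesis by (elim disjE) auto
    qed
  qed
  have "real (card (Ns ?V ?I ?Id ?E)) - real (card (Ns ?V X R ?E))
      = real_of_int (int (card (Ns ?V ?I ?Id ?E)) - int (card (Ns ?V X R ?E)))" by simp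
  also have "\<dots> = real_of_int (\<Sum>F\<in>Pow ?E. (-1) ^ card F * (int (card (Bs ?V ?I ?Id F)) - int (card (Bs ?V X R F))))"
    unfolding e1 e2 by (simp add: sum_subtractf right_diff_distrib)
  also have "\<dots> = (\<Sum>F\<in>Pow ?E. real_of_int ((-1) ^ card F * (int (card (Bs ?V ?I ?Id F)) - int (card (Bs ?V X R F)))))"
    by (rule of_int_sum)
  also have "\<dots> \<le> (\<Sum>F\<in>Pow ?E. ?M)" by (rule sum_mono) (rule tm)
  also have "\<dots> = 2 ^ card ?E * ?M" using finE by (simp add: card_Pow)
  finally show ?thesis .
qed


lemma extend_matching:
  assumes "finite A" "finite B" "card A = card B"
    "\<forall>a\<in>A. \<forall>b\<in>B. \<forall>b'\<in>B. M a b \<longrightarrow> M a b' \<longrightarrow> b = b'"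
    "\<forall>a\<in>A. \<forall>a'\<in>A. \<forall>b\<in>B. M a b \<longrightarrow> M a' b \<longrightarrow> a = a'"
  shows "\<exists>\<sigma>. bij_betw \<sigma> A B \<and> (\<forall>a\<in>A. \<forall>b\<in>B. M a b \<longrightarrow> \<sigma> a = b)"
proof -
  define A1 where "A1 = {a\<in>A. \<exists>b\<in>B. M a b}"
  define f where "f = (\<lambda>a. SOME b. b \<in> B \<and> M a b)"
  have f: "f a \<in> B \<and> M a (f a)" if "a \<in> A1" for a
  proof -
    have "\<exists>b. b \<in> B \<and> M a b" using that unfolding A1_def by blast
    then show ?thesis unfolding f_def by (rule someI_ex)
  qed
  have A1A: "A1 \<subseteq> A" unfolding A1_def by blast
  have fu: "f a = b" if "a \<in> A1" "b \<in> B" "M a b" for a b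
    using assms(4) f[OF that(1)] that A1A by blast
  define B1 where "B1 = f ` A1"
  have inj: "inj_on f A1"
  proof (rule inj_onI)
    fix a a' assume "a \<in> A1" "a' \<in> A1" "f a = f a'"
    then show "a = a'" using f[of a] f[of a'] assms(5) A1A by (metis subsetD)
  qed
  have bij1: "bij_betw f A1 B1" unfolding B1_def using inj by (simp add: bij_betw_def)
  have B1B: "B1 \<subseteq> B" unfolding B1_def using f by blast
  have finA1: "finite A1" using finite_subset[OF A1A assms(1)] .
  have "card B1 = card A1" unfolding B1_def using card_image[OF inj] .
  then have "card (A - A1) = card (B - B1)"
    using assms(1,2,3) A1A B1B finA1 by (simp add: card_Diff_subset finite_subset)
  then obtain h where h: "bij_betw h (A - A1) (B - B1)"
    using finite_same_card_bij[of "A - A1" "B - B1"] assms(1,2) by blast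
  define \<sigma> where "\<sigma> = (\<lambda>a. if a \<in> A1 then f a else h a)"
  have b1: "bij_betw \<sigma> A1 B1" using bij1 bij_betw_cong[of A1 \<sigma> f B1] unfolding \<sigma>_def by simp
  have b2: "bij_betw \<sigma> (A - A1) (B - B1)" using h bij_betw_cong[of "A - A1" \<sigma> h "B - B1"] unfolding \<sigma>_def by simp
  have "bij_betw \<sigma> (A1 \<union> (A - A1)) (B1 \<union> (B - B1))"
    by (rule bij_betw_combine[OF b1 b2]) blast
  moreover have "A1 \<union> (A - A1) = A" "B1 \<union> (B - B1) = B" using A1A B1B by blast+
  ultimately have "bij_betw \<sigma> A B" by simp
  moreover have "\<forall>a\<in>A. \<forall>b\<in>B. M a b \<longrightarrow> \<sigma> a = b"
  proof (intro ballI impI)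
    fix a b assume ab: "a \<in> A" "b \<in> B" "M a b"
    then have "a \<in> A1" unfolding A1_def by blast
    then show "\<sigma> a = b" unfolding \<sigma>_def using fu ab by simp
  qed
  ultimately show ?thesis by blast
qed

lemma gwf_sub: "gwf V E \<Longrightarrow> e \<in> E \<Longrightarrow> e \<subseteq> V"
proof -
  assume g: "gwf V E" and e: "e \<in> E"
  then obtain x y where "e = {x,y}" "x \<in> V" "y \<in> V" unfolding gwf_def by blast
  then show "e \<subseteq> V" by simp
qed

lemma complete_sys:
  assumes gw: "gwf V E" and ms: "msys V E m X R"
  shows "\<exists>R'. bsys V E m X R' \<and> Ns V X R' E \<subseteq> Ns V X R E"
proof -
  have fin: "\<And>u. u \<in> V \<Longrightarrow> finite (X u) \<and> card (X u) = m" using ms unfolding msys_def by blast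
  have sym: "\<And>u a v b. R u a v b \<Longrightarrow> R v b u a" using ms unfolding msys_def by blast
  have match: "\<And>u v a b b'. u \<in> V \<Longrightarrow> v \<in> V \<Longrightarrow> u \<noteq> v \<Longrightarrow> {u,v} \<in> E \<Longrightarrow> a \<in> X u \<Longrightarrow> b \<in> X v \<Longrightarrow> b' \<in> X v
      \<Longrightarrow> R u a v b \<Longrightarrow> R u a v b' \<Longrightarrow> b = b'"
    using ms unfolding msys_def by blast
  define S where "S = (\<lambda>u v. SOME \<sigma>. bij_betw \<sigma> (X u) (X v) \<and> (\<forall>a\<in>X u. \<forall>b\<in>X v. R u a v b \<longrightarrow> \<sigma> a = b))"
  have S: "bij_betw (S u v) (X u) (X v) \<and> (\<forall>a\<in>X u. \<forall>b\<in>X v. R u a v b \<longrightarrow> S u v a = b)"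
    if uv: "u \<in> V" "v \<in> V" "u \<noteq> v" "{u,v} \<in> E" for u v
  proof -
    have vu: "{v,u} \<in> E" using uv(4) by (simp add: insert_commute)
    have "\<exists>\<sigma>. bij_betw \<sigma> (X u) (X v) \<and> (\<forall>a\<in>X u. \<forall>b\<in>X v. R u a v b \<longrightarrow> \<sigma> a = b)"
    proof (rule extend_matching)
      show "finite (X u)" "finite (X v)" "card (X u) = card (X v)" using fin uv by auto
      show "\<forall>a\<in>X u. \<forall>b\<in>X v. \<forall>b'\<in>X v. R u a v b \<longrightarrow> R u a v b' \<longrightarrow> b = b'"
        using match[OF uv] by blast
      show "\<forall>a\<in>X u. \<forall>a'\<in>X u. \<forall>b\<in>X v. R u a v b \<longrightarrow> R u a' v b \<longrightarrow> a = a'"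
      proof (intro ballI impI)
        fix a a' b assume h: "a \<in> X u" "a' \<in> X u" "b \<in> X v" "R u a v b" "R u a' v b"
        have "v \<noteq> u" using uv(3) by simp
        from match[OF uv(2) uv(1) this vu h(3) h(1) h(2) sym[OF h(4)] sym[OF h(5)]]
        show "a = a'" .
      qed
    qed
    then show ?thesis unfolding S_def by (rule someI_ex)
  qed
  define or where "or = (\<lambda>e::'a set. SOME p. e = {fst p, snd p})"
  have or: "or {u,v} = (u,v) \<or> or {u,v} = (v,u)" for u v
  proof -
    have "{u,v} = {fst (or {u,v}), snd (or {u,v})}" unfolding or_def
      by (rule someI[of _ "(u,v)"]) simp
    then show ?thesis by (cases "or {u,v}") (auto simp: doubleton_eq_iff)
  qed
  define R' where "R' = (\<lambda>u a v b. u \<in> V \<and> v \<in> V \<and> u \<noteq> v \<and> {u,v} \<in> E \<and> a \<in> X u \<and> b \<in> X v \<and>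
     (if or {u,v} = (u,v) then S u v a = b else S v u b = a))"
  have R'sym: "R' v b u a" if "R' u a v b" for u a v b
  proof -
    have base: "v \<in> V \<and> u \<in> V \<and> v \<noteq> u \<and> {v,u} \<in> E \<and> b \<in> X v \<and> a \<in> X u"
      using that unfolding R'_def by (auto simp: insert_commute)
    have ne: "u \<noteq> v" using base by auto
    show ?thesis
    proof (cases "or {u,v} = (u,v)")
      case True
      then have "or {v,u} \<noteq> (v,u)" using ne by (simp add: insert_commute)
      then show ?thesis using that True base unfolding R'_def by (simp add: insert_commute)
    next
      case False
      then have "or {u,v} = (v,u)" using or[of u v] by simp
      then have "or {v,u} = (v,u)" by (simp add: insert_commute)
      then show ?thesis using that False base unfolding R'_def by (simp add: insert_commute)
    qed
  qed
  have "bsys V E m X R'" unfolding bsys_def msys_def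
  proof (intro conjI ballI allI impI)
    show "\<And>u. u \<in> V \<Longrightarrow> finite (X u)" "\<And>u. u \<in> V \<Longrightarrow> card (X u) = m" using fin by auto
    show "\<And>u a v b. R' u a v b \<Longrightarrow> R' v b u a" using R'sym by blast
  next
    fix u v a b b'
    assume uv: "u \<in> V" "v \<in> V" "u \<noteq> v" "{u,v} \<in> E" and ab: "a \<in> X u" "b \<in> X v" "b' \<in> X v"
      and r: "R' u a v b" "R' u a v b'"
    show "b = b'"
    proof (cases "or {u,v} = (u,v)")
      case True
      then show ?thesis using r unfolding R'_def by simp
    next
      case False
      then have "S v u b = a" "S v u b' = a" using r unfolding R'_def by auto
      moreover have inj: "inj_on (S v u) (X v)" using S[OF uv(2,1) uv(3)[symmetric]] uv(4)
        by (simp add: insert_commute bij_betw_def)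
      ultimately show ?thesis using inj_onD[OF inj _ ab(2) ab(3)] by simp
    qed
  next
    fix u v a assume uv: "u \<in> V" "v \<in> V" "u \<noteq> v" "{u,v} \<in> E" and a: "a \<in> X u"
    show "\<exists>b\<in>X v. R' u a v b"
    proof (cases "or {u,v} = (u,v)")
      case True
      have sx: "S u v a \<in> X v" using bij_betw_apply[OF S[OF uv, THEN conjunct1] a] .
      then have "R' u a v (S u v a)" using True uv a unfolding R'_def by simp
      then show ?thesis using sx by blast
    next
      case False
      have "bij_betw (S v u) (X v) (X u)" using S[OF uv(2,1) uv(3)[symmetric]] uv(4) by (simp add: insert_commute)
      then have "a \<in> S v u ` X v" using a unfolding bij_betw_def by simp
      then obtain b where bx: "b \<in> X v" "S v u b = a" by blast
      then have "R' u a v b" using False uv a unfolding R'_def by simp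
      then show ?thesis using bx by blast
    qed
  qed
  moreover have "Ns V X R' E \<subseteq> Ns V X R E"
  proof
    fix c assume c: "c \<in> Ns V X R' E"
    have cP: "c \<in> PiE V X" using c unfolding Ns_def by blast
    have "\<not> confl R c e" if e: "e \<in> E" for e
    proof
      assume "confl R c e"
      then obtain u v where uv: "e = {u,v}" "u \<noteq> v" "R u (c u) v (c v)" unfolding confl_def by blast
      have "e \<subseteq> V" using gwf_sub[OF gw e] .
      then have uvV: "u \<in> V" "v \<in> V" using uv(1) by auto
      have cuv: "c u \<in> X u" "c v \<in> X v" using cP uvV by auto
      have eE: "{u,v} \<in> E" using e uv by simp
      have "R' u (c u) v (c v)"
      proof (cases "or {u,v} = (u,v)")
        case True
        then show ?thesis using S[OF uvV uv(2) eE] cuv uv(3) uvV uv(2) eE unfolding R'_def by auto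
      next
        case False
        have "S v u (c v) = c u" using S[OF uvV(2,1) uv(2)[symmetric]] eE cuv sym[OF uv(3)]
          by (simp add: insert_commute)
        then show ?thesis using False cuv uvV uv(2) eE unfolding R'_def by auto
      qed
      then have "confl R' c e" unfolding confl_def using uv by blast
      then show False using c e unfolding Ns_def by blast
    qed
    then show "c \<in> Ns V X R E" using cP unfolding Ns_def by blast
  qed
  ultimately show ?thesis by blast
qed


lemma wfH_noloop: "wf_graph H \<Longrightarrow> {x} \<notin> edges H"
proof
  assume "wf_graph H" "{x} \<in> edges H"
  then obtain a b where "a \<noteq> b" "{x} = {a,b}" unfolding wf_graph_def by blast
  then show False by (auto simp: doubleton_eq_iff)
qed

lemma wf_edge_sub: "wf_graph H \<Longrightarrow> e \<in> edges H \<Longrightarrow> e \<subseteq> verts H"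
proof -
  assume "wf_graph H" "e \<in> edges H"
  then obtain a b where "e = {a,b}" "a \<in> verts H" "b \<in> verts H" unfolding wf_graph_def by blast
  then show ?thesis by simp
qed

lemma cover_count:
  assumes G: "wf_graph G" and C: "is_mfold_cover G m L H"
  shows "P_DP_cover G H = card (Ns (verts G) L (\<lambda>u a v b. {a,b} \<in> edges H) (edges G))"
proof -
  let ?V = "verts G" and ?E = "edges G" and ?R = "\<lambda>(u::'a) a (v::'a) b. {a,b} \<in> edges H"
  let ?N = "Ns ?V L ?R ?E"
  have Cc: "is_cover G L H" using C unfolding is_mfold_cover_def by simp
  have wfH: "wf_graph H" using Cc unfolding is_cover_def by (elim conjE)
  have un: "(\<Union>u\<in>?V. L u) = verts H" using Cc unfolding is_cover_def by (elim conjE)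
  have disjA: "\<forall>u\<in>?V. \<forall>v\<in>?V. u \<noteq> v \<longrightarrow> L u \<inter> L v = {}"
    using Cc unfolding is_cover_def by (elim conjE)
  have cliqA: "\<forall>u\<in>?V. \<forall>x\<in>L u. \<forall>y\<in>L u. x \<noteq> y \<longrightarrow> {x, y} \<in> edges H"
    using Cc unfolding is_cover_def by (elim conjE)
  have crossA: "\<forall>u\<in>?V. \<forall>v\<in>?V. cross_edges H (L u) (L v) \<noteq> {} \<longrightarrow> u = v \<or> {u, v} \<in> ?E"
    using Cc unfolding is_cover_def by (elim conjE)
  have disj: "\<And>u v. u \<in> ?V \<Longrightarrow> v \<in> ?V \<Longrightarrow> u \<noteq> v \<Longrightarrow> L u \<inter> L v = {}"
    using disjA by blast
  have cliq: "\<And>u x y. u \<in> ?V \<Longrightarrow> x \<in> L u \<Longrightarrow> y \<in> L u \<Longrightarrow> x \<noteq> y \<Longrightarrow> {x,y} \<in> edges H"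
    using cliqA by blast
  have cross: "\<And>u v. u \<in> ?V \<Longrightarrow> v \<in> ?V \<Longrightarrow> cross_edges H (L u) (L v) \<noteq> {} \<Longrightarrow> u = v \<or> {u,v} \<in> ?E"
    using crossA by blast
  have finL: "\<And>u. u \<in> ?V \<Longrightarrow> finite (L u)" using C unfolding is_mfold_cover_def by simp
  have finV: "finite ?V" using G unfolding wf_graph_def by simp
  have owner: "u = w" if "u \<in> ?V" "w \<in> ?V" "x \<in> L u" "x \<in> L w" for u w x
    using disj[of u w] that by blast
  have nonadj: "{x,y} \<notin> edges H" if "u \<in> ?V" "w \<in> ?V" "u \<noteq> w" "{u,w} \<notin> ?E" "x \<in> L u" "y \<in> L w" for u w x y
  proof
    assume "{x,y} \<in> edges H"
    moreover have "\<exists>a\<in>L u. \<exists>b\<in>L w. {x,y} = {a,b}" using that(5,6) by blast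
    ultimately have "{x,y} \<in> cross_edges H (L u) (L w)" unfolding cross_edges_def by simp
    then have "cross_edges H (L u) (L w) \<noteq> {}" by blast
    then have "u = w \<or> {u,w} \<in> ?E" using cross[OF that(1,2)] by simp
    then show False using that(3,4) by simp
  qed
  have bij: "bij_betw (\<lambda>c. c ` ?V) ?N {I. independent H I \<and> card I = card ?V}"
    unfolding bij_betw_def
  proof (intro conjI)
    show "inj_on (\<lambda>c. c ` ?V) ?N"
    proof (rule inj_onI)
      fix c c' assume c: "c \<in> ?N" and c': "c' \<in> ?N" and eq: "c ` ?V = c' ` ?V"
      have cP: "c \<in> PiE ?V L" "c' \<in> PiE ?V L" using c c' unfolding Ns_def by auto
      show "c = c'"
      proof (rule ext)
        fix x
        show "c x = c' x"
        proof (cases "x \<in> ?V")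
          case True
          then have "c x \<in> c ` ?V" by (rule imageI)
          then have "c x \<in> c' ` ?V" using eq by simp
          then obtain w where w: "w \<in> ?V" "c x = c' w" by (rule imageE) simp
          have h1: "c x \<in> L x" using cP(1) True by (rule PiE_mem)
          have h2: "c' w \<in> L w" using cP(2) w(1) by (rule PiE_mem)
          have "x = w" using owner[OF True w(1) h1] h2 w(2) by simp
          then show ?thesis using w(2) by simp
        next
          case False
          show ?thesis using PiE_arb[OF cP(1) False] PiE_arb[OF cP(2) False] by simp
        qed
      qed
    qed
  next
    show "(\<lambda>c. c ` ?V) ` ?N = {I. independent H I \<and> card I = card ?V}"
    proof (rule set_eqI, rule iffI)
      fix I assume "I \<in> (\<lambda>c. c ` ?V) ` ?N"
      then obtain c where c: "c \<in> ?N" and I: "I = c ` ?V" by blast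
      have cP: "c \<in> PiE ?V L" using c unfolding Ns_def by auto
      have cL: "\<And>u. u \<in> ?V \<Longrightarrow> c u \<in> L u" using cP by auto
      have sub: "I \<subseteq> verts H" unfolding I using cL un by blast
      have ind: "{x,y} \<notin> edges H" if xy: "x \<in> I" "y \<in> I" for x y
      proof -
        obtain u w where uw: "u \<in> ?V" "w \<in> ?V" "x = c u" "y = c w" using xy I by blast
        show ?thesis
        proof (cases "u = w")
          case True then show ?thesis using uw wfH_noloop[OF wfH] by simp
        next
          case False
          show ?thesis
          proof (cases "{u,w} \<in> ?E")
            case True
            have "\<not> confl ?R c {u,w}" using c True unfolding Ns_def by blast
            then show ?thesis using uw False unfolding confl_def by blast
          next
            case nE: False
            show ?thesis using nonadj[OF uw(1,2) False nE cL[OF uw(1)] cL[OF uw(2)]] uw by simp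
          qed
        qed
      qed
      have "inj_on c ?V"
      proof (rule inj_onI)
        fix u w assume "u \<in> ?V" "w \<in> ?V" "c u = c w"
        then show "u = w" using owner cL by metis
      qed
      then have "card I = card ?V" unfolding I by (simp add: card_image)
      moreover have "independent H I" unfolding independent_def using sub ind by blast
      ultimately show "I \<in> {I. independent H I \<and> card I = card ?V}" by blast
    next
      fix I assume "I \<in> {I. independent H I \<and> card I = card ?V}"
      then have ind: "independent H I" and cI: "card I = card ?V" by auto
      have sub: "I \<subseteq> verts H" and noe: "\<And>x y. x \<in> I \<Longrightarrow> y \<in> I \<Longrightarrow> {x,y} \<notin> edges H"
        using ind unfolding independent_def by auto
      have le1: "x = y" if "u \<in> ?V" "x \<in> I \<inter> L u" "y \<in> I \<inter> L u" for u x y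
        using cliq[of u x y] noe[of x y] that by blast
      have finIL: "\<And>u. u \<in> ?V \<Longrightarrow> finite (I \<inter> L u)" using finL by blast
      have cle: "card (I \<inter> L u) \<le> 1" if "u \<in> ?V" for u
        using card_le_Suc0_iff_eq[OF finIL[OF that]] le1[OF that] by auto
      have Ieq: "I = (\<Union>u\<in>?V. I \<inter> L u)" using sub un by blast
      have "card (\<Union>u\<in>?V. I \<inter> L u) = (\<Sum>u\<in>?V. card (I \<inter> L u))"
      proof (rule card_UN_disjoint[OF finV])
        show "\<forall>u\<in>?V. finite (I \<inter> L u)" using finIL by simp
        show "\<forall>u\<in>?V. \<forall>w\<in>?V. u \<noteq> w \<longrightarrow> I \<inter> L u \<inter> (I \<inter> L w) = {}"
          using disj by auto
      qed
      then have "card I = (\<Sum>u\<in>?V. card (I \<inter> L u))" using Ieq by simp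
      then have sumeq: "(\<Sum>u\<in>?V. card (I \<inter> L u)) = (\<Sum>u\<in>?V. 1)" using cI by simp
      have one: "card (I \<inter> L u) = 1" if u: "u \<in> ?V" for u
      proof (rule ccontr)
        assume "card (I \<inter> L u) \<noteq> 1"
        then have "card (I \<inter> L u) < 1" using cle[OF u] by simp
        then have "(\<Sum>u\<in>?V. card (I \<inter> L u)) < (\<Sum>u\<in>?V. 1)"
          using sum_strict_mono_ex1[OF finV, of "\<lambda>u. card (I \<inter> L u)" "\<lambda>_. 1"] cle u by blast
        then show False using sumeq by simp
      qed
      define c where "c = (\<lambda>u. if u \<in> ?V then (THE x. x \<in> I \<inter> L u) else undefined)"
      have cu: "c u \<in> I \<inter> L u \<and> (\<forall>x\<in>I \<inter> L u. x = c u)" if u: "u \<in> ?V" for u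
      proof -
        obtain x where x: "I \<inter> L u = {x}" using one[OF u] by (rule card_1_singletonE)
        then have "c u = x" unfolding c_def using u by simp
        then show ?thesis using x by blast
      qed
      have cP: "c \<in> PiE ?V L" unfolding PiE_def extensional_def using cu by (auto simp: c_def)
      have cim: "c ` ?V = I"
      proof
        show "c ` ?V \<subseteq> I" using cu by blast
        show "I \<subseteq> c ` ?V"
        proof
          fix x assume x: "x \<in> I"
          then obtain u where u: "u \<in> ?V" "x \<in> L u" using sub un by blast
          then have "x = c u" using cu[OF u(1)] x by blast
          then show "x \<in> c ` ?V" using u by blast
        qed
      qed
      have "\<not> confl ?R c e" if e: "e \<in> ?E" for e
      proof
        assume "confl ?R c e"
        then obtain a b where ab: "e = {a,b}" "{c a, c b} \<in> edges H" unfolding confl_def by blast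
        have "e \<subseteq> ?V" using wf_edge_sub[OF G e] .
        then have "a \<in> ?V" "b \<in> ?V" using ab by auto
        then have "c a \<in> I" "c b \<in> I" using cu by blast+
        then show False using noe ab(2) by simp
      qed
      then have "c \<in> ?N" using cP unfolding Ns_def by blast
      then show "I \<in> (\<lambda>c. c ` ?V) ` ?N" using cim by blast
    qed
  qed
  show ?thesis unfolding P_DP_cover_def using bij_betw_same_card[OF bij] by simp
qed

lemma cover_msys:
  assumes G: "wf_graph G" and C: "is_mfold_cover G m L H"
  shows "msys (verts G) (edges G) m L (\<lambda>u a v b. {a,b} \<in> edges H)"
  unfolding msys_def
proof (intro conjI ballI allI impI)
  let ?V = "verts G"
  have disj: "\<And>u v. u \<in> ?V \<Longrightarrow> v \<in> ?V \<Longrightarrow> u \<noteq> v \<Longrightarrow> L u \<inter> L v = {}"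
    and mat: "\<And>u v. u \<in> ?V \<Longrightarrow> v \<in> ?V \<Longrightarrow> {u,v} \<in> edges G \<Longrightarrow> u \<noteq> v \<Longrightarrow> is_matching (cross_edges H (L u) (L v))"
  proof -
    have Cc: "is_cover G L H" using C unfolding is_mfold_cover_def by simp
    have d: "\<forall>u\<in>?V. \<forall>v\<in>?V. u \<noteq> v \<longrightarrow> L u \<inter> L v = {}"
      using Cc unfolding is_cover_def by (elim conjE)
    have mA: "\<forall>u\<in>?V. \<forall>v\<in>?V. {u, v} \<in> edges G \<longrightarrow> u \<noteq> v \<longrightarrow> is_matching (cross_edges H (L u) (L v))"
      using Cc unfolding is_cover_def by (elim conjE)
    show "\<And>u v. u \<in> ?V \<Longrightarrow> v \<in> ?V \<Longrightarrow> u \<noteq> v \<Longrightarrow> L u \<inter> L v = {}" using d by blast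
    show "\<And>u v. u \<in> ?V \<Longrightarrow> v \<in> ?V \<Longrightarrow> {u,v} \<in> edges G \<Longrightarrow> u \<noteq> v \<Longrightarrow> is_matching (cross_edges H (L u) (L v))"
      using mA by blast
  qed
  have fc: "\<forall>u\<in>?V. finite (L u) \<and> card (L u) = m" using C unfolding is_mfold_cover_def by (elim conjE)
  show "\<And>u. u \<in> ?V \<Longrightarrow> finite (L u)" using fc by simp
  show "\<And>u. u \<in> ?V \<Longrightarrow> card (L u) = m" using fc by simp
  show "\<And>u a v b. {a,b} \<in> edges H \<Longrightarrow> {b,a} \<in> edges H" by (simp add: insert_commute)
  fix u v a b b'
  assume uv: "u \<in> ?V" "v \<in> ?V" "u \<noteq> v" "{u,v} \<in> edges G" and ab: "a \<in> L u" "b \<in> L v" "b' \<in> L v"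
    and e: "{a,b} \<in> edges H" "{a,b'} \<in> edges H"
  show "b = b'"
  proof (rule ccontr)
    assume nb: "b \<noteq> b'"
    have anv: "a \<notin> L v" using disj[OF uv(1,2,3)] ab by blast
    have "{a,b} \<noteq> {a,b'}"
    proof
      assume "{a,b} = {a,b'}"
      then have "b \<in> {a,b'}" by blast
      moreover have "b \<noteq> a" using anv ab(2) by blast
      ultimately show False using nb by simp
    qed
    moreover have c1: "{a,b} \<in> cross_edges H (L u) (L v)" unfolding cross_edges_def
      using e(1) ab(1,2) by (intro CollectI conjI bexI[of _ a] bexI[of _ b] refl) simp_all
    moreover have c2: "{a,b'} \<in> cross_edges H (L u) (L v)" unfolding cross_edges_def
      using e(2) ab(1,3) by (intro CollectI conjI bexI[of _ a] bexI[of _ b'] refl) simp_all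
    moreover have m3: "\<forall>e1\<in>cross_edges H (L u) (L v). \<forall>e2\<in>cross_edges H (L u) (L v). e1 \<noteq> e2 \<longrightarrow> e1 \<inter> e2 = {}"
      using mat[OF uv(1,2,4,3)] unfolding is_matching_def .
    ultimately have "{a,b} \<inter> {a,b'} = {}" using bspec[OF bspec[OF m3 c1] c2] by simp
    then show False by simp
  qed
qed

lemma chrom_eq:
  fixes G :: "'a graph"
  shows "chrom_poly G m = card (Ns (verts G) (\<lambda>_. {1..m}) (\<lambda>u a v b. a = b) (edges G))"
proof -
  have "{f \<in> verts G \<rightarrow>\<^sub>E {1..m}. \<forall>u v. {u, v} \<in> edges G \<longrightarrow> u \<noteq> v \<longrightarrow> f u \<noteq> f v}
      = {f \<in> verts G \<rightarrow>\<^sub>E {1..m}. \<forall>e\<in>edges G. \<not> confl (\<lambda>u a v b. a = b) f e}"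
  proof (rule Collect_cong, rule conj_cong[OF refl], rule iffI)
    fix f :: "'a \<Rightarrow> nat" assume h: "\<forall>u v. {u, v} \<in> edges G \<longrightarrow> u \<noteq> v \<longrightarrow> f u \<noteq> f v"
    show "\<forall>e\<in>edges G. \<not> confl (\<lambda>u a v b. a = b) f e"
    proof (intro ballI notI)
      fix e assume "e \<in> edges G" "confl (\<lambda>u a v b. a = b) f e"
      then obtain u v where "e = {u,v}" "u \<noteq> v" "f u = f v" "e \<in> edges G" unfolding confl_def by blast
      then show False using h by simp
    qed
  next
    fix f :: "'a \<Rightarrow> nat" assume h: "\<forall>e\<in>edges G. \<not> confl (\<lambda>u a v b. a = b) f e"
    show "\<forall>u v. {u, v} \<in> edges G \<longrightarrow> u \<noteq> v \<longrightarrow> f u \<noteq> f v"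
    proof (intro allI impI notI)
      fix u v assume "{u, v} \<in> edges G" "u \<noteq> v" "f u = f v"
      then have "confl (\<lambda>u a v b. a = b) f {u,v}" unfolding confl_def by blast
      then show False using h \<open>{u, v} \<in> edges G\<close> by blast
    qed
  qed
  then show ?thesis unfolding chrom_poly_def Ns_def by simp
qed


lemma canonical_cover:
  fixes G :: "'a graph"
  assumes G: "wf_graph G"
  shows "\<exists>L H. is_mfold_cover G m L H \<and> P_DP_cover G H \<le> chrom_poly G m"
proof -
  let ?V = "verts G" and ?E = "edges G"
  have finV: "finite ?V" using G unfolding wf_graph_def by simp
  obtain idx where "bij_betw idx ?V {0..<card ?V}" using ex_bij_betw_finite_nat[OF finV] by blast
  then have inj: "inj_on idx ?V" by (rule bij_betw_imp_inj_on)
  define enc where "enc = (\<lambda>u i. prod_encode (idx u, i))"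
  have encinj: "enc u i = enc w j \<longleftrightarrow> u = w \<and> i = j" if "u \<in> ?V" "w \<in> ?V" for u w i j
    using inj_on_eq_iff[OF inj that] unfolding enc_def by simp
  have encdec: "snd (prod_decode (enc u i)) = i" for u i unfolding enc_def by simp
  define L0 where "L0 = (\<lambda>u. enc u ` {1..m})"
  define E0 where "E0 = {{enc u i, enc v j} | u i v j. u \<in> ?V \<and> v \<in> ?V \<and> i \<in> {1..m} \<and> j \<in> {1..m} \<and>
      (u,i) \<noteq> (v,j) \<and> (u = v \<or> (i = j \<and> {u,v} \<in> ?E))}"
  define H0 :: "nat graph" where "H0 = ((\<Union>u\<in>?V. L0 u), E0)"
  have vH: "verts H0 = (\<Union>u\<in>?V. L0 u)" and eH: "edges H0 = E0" unfolding H0_def verts_def edges_def by simp_all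
  have E0el: "\<exists>u i v j. e = {enc u i, enc v j} \<and> u \<in> ?V \<and> v \<in> ?V \<and> i \<in> {1..m} \<and> j \<in> {1..m} \<and>
      (u,i) \<noteq> (v,j) \<and> (u = v \<or> (i = j \<and> {u,v} \<in> ?E))" if "e \<in> E0" for e
    using that unfolding E0_def by (simp only: mem_Collect_eq)
  have E0mem: "{enc u i, enc v j} \<in> E0 \<longleftrightarrow> (u,i) \<noteq> (v,j) \<and> (u = v \<or> (i = j \<and> {u,v} \<in> ?E))"
    if uv: "u \<in> ?V" "v \<in> ?V" "i \<in> {1..m}" "j \<in> {1..m}" for u v i j
  proof
    assume "{enc u i, enc v j} \<in> E0"
    from E0el[OF this] obtain u' i' v' j' where h: "{enc u i, enc v j} = {enc u' i', enc v' j'}" "u' \<in> ?V" "v' \<in> ?V"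
      "(u',i') \<noteq> (v',j')" "u' = v' \<or> (i' = j' \<and> {u',v'} \<in> ?E)" by (elim exE conjE) simp
    from h(1) have "(enc u i = enc u' i' \<and> enc v j = enc v' j') \<or> (enc u i = enc v' j' \<and> enc v j = enc u' i')"
      by (simp add: doubleton_eq_iff)
    then show "(u,i) \<noteq> (v,j) \<and> (u = v \<or> (i = j \<and> {u,v} \<in> ?E))"
    proof
      assume "enc u i = enc u' i' \<and> enc v j = enc v' j'"
      then have "u = u'" "i = i'" "v = v'" "j = j'" using encinj uv h(2,3) by auto
      then show ?thesis using h(4,5) by simp
    next
      assume "enc u i = enc v' j' \<and> enc v j = enc u' i'"
      then have "u = v'" "i = j'" "v = u'" "j = i'" using encinj uv h(2,3) by auto
      then show ?thesis using h(4,5) by (auto simp: insert_commute)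
    qed
  next
    assume "(u,i) \<noteq> (v,j) \<and> (u = v \<or> (i = j \<and> {u,v} \<in> ?E))"
    then show "{enc u i, enc v j} \<in> E0" unfolding E0_def using uv
      by (intro CollectI exI[of _ u] exI[of _ i] exI[of _ v] exI[of _ j]) simp
  qed
  have inL0: "x \<in> L0 u \<longleftrightarrow> (\<exists>i\<in>{1..m}. x = enc u i)" for x u unfolding L0_def by blast
  have cov: "is_cover G L0 H0" unfolding is_cover_def
  proof (intro conjI ballI impI)
    show "wf_graph H0" unfolding wf_graph_def
    proof (intro conjI ballI)
      show "finite (verts H0)" unfolding vH L0_def using finV by simp
    next
      fix e assume "e \<in> edges H0"
      then obtain u i v j where h: "e = {enc u i, enc v j}" "u \<in> ?V" "v \<in> ?V" "i \<in> {1..m}" "j \<in> {1..m}" "(u,i) \<noteq> (v,j)"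
        using E0el unfolding eH by blast
      have "enc u i \<noteq> enc v j" using encinj[OF h(2,3)] h(6) by simp
      moreover have "enc u i \<in> L0 u" "enc v j \<in> L0 v" unfolding L0_def using h(4,5) by auto
      then have "enc u i \<in> verts H0" "enc v j \<in> verts H0" unfolding vH using h(2,3) by blast+
      ultimately show "\<exists>x y. x \<noteq> y \<and> e = {x, y} \<and> x \<in> verts H0 \<and> y \<in> verts H0" using h(1) by blast
    qed
  next
    show "(\<Union>u\<in>?V. L0 u) = verts H0" using vH by simp
  next
    fix u v assume uv: "u \<in> ?V" "v \<in> ?V" "u \<noteq> v"
    show "L0 u \<inter> L0 v = {}"
    proof (rule equals0I)
      fix x assume "x \<in> L0 u \<inter> L0 v"
      then obtain i j where "x = enc u i" "x = enc v j" unfolding L0_def by blast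
      then have "enc u i = enc v j" by simp
      then show False using encinj[OF uv(1,2), of i j] uv(3) by simp
    qed
  next
    fix u x y assume u: "u \<in> ?V" and xy: "x \<in> L0 u" "y \<in> L0 u" "x \<noteq> y"
    obtain i j where ij: "i \<in> {1..m}" "j \<in> {1..m}" "x = enc u i" "y = enc u j" using xy inL0 by blast
    then have "(u,i) \<noteq> (u,j)" using xy(3) by auto
    then show "{x, y} \<in> edges H0" unfolding eH ij(3,4) using E0mem[OF u u ij(1,2)] by simp
  next
    fix u v assume uv: "u \<in> ?V" "v \<in> ?V" and ne: "cross_edges H0 (L0 u) (L0 v) \<noteq> {}"
    then obtain e where "e \<in> cross_edges H0 (L0 u) (L0 v)" by blast
    then obtain x y where xy: "e \<in> E0" "x \<in> L0 u" "y \<in> L0 v" "e = {x,y}" unfolding cross_edges_def eH by blast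
    obtain i j where ij: "i \<in> {1..m}" "j \<in> {1..m}" "x = enc u i" "y = enc v j" using xy(2,3) inL0 by blast
    show "u = v \<or> {u, v} \<in> ?E" using E0mem[OF uv ij(1,2)] xy(1,4) ij(3,4) by auto
  next
    fix u v assume uv: "u \<in> ?V" "v \<in> ?V" "{u, v} \<in> ?E" "u \<noteq> v"
    have form: "\<exists>i\<in>{1..m}. e = {enc u i, enc v i}" if ec: "e \<in> cross_edges H0 (L0 u) (L0 v)" for e
    proof -
      obtain x y where xy: "e \<in> E0" "x \<in> L0 u" "y \<in> L0 v" "e = {x,y}" using ec unfolding cross_edges_def eH by blast
      obtain i j where ij: "i \<in> {1..m}" "j \<in> {1..m}" "x = enc u i" "y = enc v j" using xy(2,3) inL0 by blast
      have "i = j" using E0mem[OF uv(1,2) ij(1,2)] xy(1,4) ij(3,4) uv(4) by auto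
      then show ?thesis using ij xy(4) by blast
    qed
    show "is_matching (cross_edges H0 (L0 u) (L0 v))" unfolding is_matching_def
    proof (intro ballI impI)
      fix e1 e2 assume e: "e1 \<in> cross_edges H0 (L0 u) (L0 v)" "e2 \<in> cross_edges H0 (L0 u) (L0 v)" "e1 \<noteq> e2"
      obtain i where i: "e1 = {enc u i, enc v i}" using form[OF e(1)] by blast
      obtain k where k: "e2 = {enc u k, enc v k}" using form[OF e(2)] by blast
      have "i \<noteq> k" using e(3) i k by auto
      then show "e1 \<inter> e2 = {}" unfolding i k using encinj[OF uv(1,1)] encinj[OF uv(1,2)] encinj[OF uv(2,1)]
        encinj[OF uv(2,2)] uv(4) by auto
    qed
  qed
  have mf: "is_mfold_cover G m L0 H0" unfolding is_mfold_cover_def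
  proof (intro conjI ballI)
    show "is_cover G L0 H0" by (rule cov)
    fix u assume u: "u \<in> ?V"
    show "finite (L0 u)" unfolding L0_def by simp
    have "inj_on (enc u) {1..m}" using encinj[OF u u] by (simp add: inj_on_def)
    then show "card (L0 u) = m" unfolding L0_def by (simp add: card_image)
  qed
  let ?R0 = "\<lambda>(u::'a) a (v::'a) b. {a, b} \<in> edges H0"
  have pc: "P_DP_cover G H0 = card (Ns ?V L0 ?R0 ?E)" using cover_count[OF G mf] .
  define \<Psi> where "\<Psi> = (\<lambda>c::'a \<Rightarrow> nat. restrict (\<lambda>u. snd (prod_decode (c u))) ?V)"
  let ?T = "{f \<in> ?V \<rightarrow>\<^sub>E {1..m}. \<forall>u v. {u, v} \<in> ?E \<longrightarrow> u \<noteq> v \<longrightarrow> f u \<noteq> f v}"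
  have repr: "\<exists>i\<in>{1..m}. c u = enc u i \<and> \<Psi> c u = i" if c: "c \<in> Ns ?V L0 ?R0 ?E" and u: "u \<in> ?V" for c u
  proof -
    have "c u \<in> L0 u" using c u unfolding Ns_def by auto
    then obtain i where "i \<in> {1..m}" "c u = enc u i" using inL0 by blast
    then show ?thesis unfolding \<Psi>_def using u encdec by auto
  qed
  have "card (Ns ?V L0 ?R0 ?E) \<le> card ?T"
  proof (rule card_inj_on_le)
    have fP: "finite (?V \<rightarrow>\<^sub>E {1..m})" by (rule finite_PiE[OF finV]) simp
    have "?T \<subseteq> ?V \<rightarrow>\<^sub>E {1..m}" by (rule Collect_restrict)
    then show "finite ?T" using fP by (rule finite_subset)
    show "inj_on \<Psi> (Ns ?V L0 ?R0 ?E)"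
    proof (rule inj_onI)
      fix c c' assume c: "c \<in> Ns ?V L0 ?R0 ?E" and c': "c' \<in> Ns ?V L0 ?R0 ?E" and eq: "\<Psi> c = \<Psi> c'"
      have cP: "c \<in> PiE ?V L0" "c' \<in> PiE ?V L0" using c c' unfolding Ns_def by auto
      show "c = c'"
      proof (rule ext)
        fix u
        show "c u = c' u"
        proof (cases "u \<in> ?V")
          case True
          obtain i where i: "c u = enc u i" "\<Psi> c u = i" using repr[OF c True] by blast
          obtain j where j: "c' u = enc u j" "\<Psi> c' u = j" using repr[OF c' True] by blast
          have "i = j" using i(2) j(2) eq by simp
          then show ?thesis using i(1) j(1) by simp
        next
          case False
          show ?thesis using PiE_arb[OF cP(1) False] PiE_arb[OF cP(2) False] by simp
        qed
      qed
    qed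
    show "\<Psi> ` Ns ?V L0 ?R0 ?E \<subseteq> ?T"
    proof
      fix f assume "f \<in> \<Psi> ` Ns ?V L0 ?R0 ?E"
      then obtain c where c: "c \<in> Ns ?V L0 ?R0 ?E" and f: "f = \<Psi> c" by blast
      have "f \<in> ?V \<rightarrow>\<^sub>E {1..m}"
      proof
        fix u assume u: "u \<in> ?V"
        then show "f u \<in> {1..m}" using repr[OF c u] f by auto
      next
        fix u assume "u \<notin> ?V"
        then show "f u = undefined" unfolding f \<Psi>_def by simp
      qed
      moreover have "f u \<noteq> f v" if uv: "{u, v} \<in> ?E" "u \<noteq> v" for u v
      proof
        assume fe: "f u = f v"
        have "{u,v} \<subseteq> ?V" using wf_edge_sub[OF G uv(1)] .
        then have uvV: "u \<in> ?V" "v \<in> ?V" by auto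
        obtain i where i: "i \<in> {1..m}" "c u = enc u i" "\<Psi> c u = i" using repr[OF c uvV(1)] by blast
        obtain j where j: "j \<in> {1..m}" "c v = enc v j" "\<Psi> c v = j" using repr[OF c uvV(2)] by blast
        have "i = j" using fe i(3) j(3) f by simp
        then have "{c u, c v} \<in> edges H0" unfolding eH i(2) j(2) using E0mem[OF uvV i(1) j(1)] uv by simp
        then have "confl ?R0 c {u,v}" unfolding confl_def using uv(2) by blast
        then show False using c uv(1) unfolding Ns_def by blast
      qed
      ultimately show "f \<in> ?T" by blast
    qed
  qed
  then have "P_DP_cover G H0 \<le> chrom_poly G m" unfolding pc chrom_poly_def .
  then show ?thesis using mf by blast
qed


lemma PDP_facts:
  fixes G :: "'a graph"
  assumes G: "wf_graph G" and godd: "odd g" and cyc: "\<forall>k. has_cycle G k \<longrightarrow> g \<le> k" and m: "1 \<le> m"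
  shows "P_DP G m \<le> chrom_poly G m"
    and "real (chrom_poly G m) - real (P_DP G m) \<le> 2 ^ card (edges G) * real m powi (int (card (verts G)) - int g)"
proof -
  let ?V = "verts G" and ?E = "edges G"
  define S where "S = {P_DP_cover G H | L H. is_mfold_cover G m L H}"
  obtain L0 H0 where c0: "is_mfold_cover G m L0 H0" "P_DP_cover G H0 \<le> chrom_poly G m"
    using canonical_cover[OF G] by blast
  have inS: "P_DP_cover G H0 \<in> S" unfolding S_def using c0(1) by blast
  then have Sne: "S \<noteq> {}" by blast
  have PS: "P_DP G m = Inf S" unfolding P_DP_def S_def ..
  have "Inf S \<in> S" using Inf_nat_def1[OF Sne] .
  then obtain L H where LH: "is_mfold_cover G m L H" "P_DP G m = P_DP_cover G H" unfolding S_def PS by blast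
  have "bdd_below S" by (rule bdd_belowI[of _ 0]) simp
  then have "Inf S \<le> P_DP_cover G H0" using inS by (rule cInf_lower[rotated])
  then show "P_DP G m \<le> chrom_poly G m" using c0(2) PS by simp
  let ?RH = "\<lambda>(u::'a) a (v::'a) b. {a, b} \<in> edges H"
  have ms: "msys ?V ?E m L ?RH" using cover_msys[OF G LH(1)] .
  obtain R' where R': "bsys ?V ?E m L R'" "Ns ?V L R' ?E \<subseteq> Ns ?V L ?RH ?E"
    using complete_sys[OF wf_gwf[OF G] ms] by blast
  have finV: "finite ?V" using G unfolding wf_graph_def by simp
  have finL: "\<forall>u\<in>?V. finite (L u)" using ms unfolding msys_def by blast
  have fP: "finite (PiE ?V L)" using finL by (intro finite_PiE[OF finV]) simp
  have "Ns ?V L ?RH ?E \<subseteq> PiE ?V L" unfolding Ns_def by (rule Collect_restrict)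
  then have fin: "finite (Ns ?V L ?RH ?E)" using fP by (rule finite_subset)
  have le: "card (Ns ?V L R' ?E) \<le> card (Ns ?V L ?RH ?E)" using card_mono[OF fin R'(2)] .
  have pd: "P_DP G m = card (Ns ?V L ?RH ?E)" using LH(2) cover_count[OF G LH(1)] by simp
  have mb: "real (chrom_poly G m) - real (card (Ns ?V L R' ?E)) \<le> 2 ^ card ?E * real m powi (int (card ?V) - int g)"
    using main_bound[OF G godd cyc m R'(1)] chrom_eq[of G m] by simp
  have "real (card (Ns ?V L R' ?E)) \<le> real (P_DP G m)" using le pd by simp
  then show "real (chrom_poly G m) - real (P_DP G m) \<le> 2 ^ card ?E * real m powi (int (card ?V) - int g)"
    using mb by linarith
qed

lemma bigO_main:
  fixes G :: "'a graph"
  assumes G: "wf_graph G" and godd: "odd g" and cyc: "\<forall>k. has_cycle G k \<longrightarrow> g \<le> k"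
  shows "(\<lambda>m. real (chrom_poly G m) - real (P_DP G m)) \<in> O(\<lambda>m. real m powi (int (card (verts G)) - int g))"
proof (rule bigoI[where c = "2 ^ card (edges G)"])
  show "\<forall>\<^sub>F m in at_top. norm (real (chrom_poly G m) - real (P_DP G m)) \<le> 2 ^ card (edges G) * norm (real m powi (int (card (verts G)) - int g))"
    using eventually_ge_at_top[of "1::nat"]
  proof eventually_elim
    case (elim m)
    have a: "P_DP G m \<le> chrom_poly G m" using PDP_facts(1)[OF G godd cyc elim] .
    have b: "real (chrom_poly G m) - real (P_DP G m) \<le> 2 ^ card (edges G) * real m powi (int (card (verts G)) - int g)"
      using PDP_facts(2)[OF G godd cyc elim] .
    have "0 \<le> real (chrom_poly G m) - real (P_DP G m)" using a by simp
    moreover have "0 \<le> real m powi (int (card (verts G)) - int g)" using elim by simp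
    ultimately show ?case using b by simp
  qed
qed

theorem theorem4:
  shows "(\<forall>(g::nat) (n::nat) (G::'a graph).
            odd g \<and> g \<ge> 3 \<and> wf_graph G \<and> card (verts G) = n \<and>
            (girth G = enat g \<or> girth G = enat (g + 1)) \<longrightarrow>
            (\<lambda>m. real (chrom_poly G m) - real (P_DP G m)) \<in> O(\<lambda>m. real m powi (int n - int g)))
       \<and> (\<forall>M::'b graph. wf_graph M \<longrightarrow>
            (\<lambda>m. real (chrom_poly M m) - real (P_DP M m)) \<in> O(\<lambda>m. real m powi (int (card (verts M)) - 3)))"
proof (intro conjI allI impI)
  fix g n :: nat and G :: "'a graph"
  assume h: "odd g \<and> g \<ge> 3 \<and> wf_graph G \<and> card (verts G) = n \<and> (girth G = enat g \<or> girth G = enat (g + 1))"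
  have cyc: "\<forall>k. has_cycle G k \<longrightarrow> g \<le> k"
  proof (intro allI impI)
    fix k assume hk: "has_cycle G k"
    have g1: "girth G \<le> enat k" unfolding girth_def by (rule Inf_lower) (use hk in blast)
    have g2: "enat g \<le> girth G" using h by auto
    have "enat g \<le> enat k" using order_trans[OF g2 g1] .
    then show "g \<le> k" by simp
  qed
  have "(\<lambda>m. real (chrom_poly G m) - real (P_DP G m)) \<in> O(\<lambda>m. real m powi (int (card (verts G)) - int g))"
    using bigO_main[OF _ _ cyc] h by blast
  then show "(\<lambda>m. real (chrom_poly G m) - real (P_DP G m)) \<in> O(\<lambda>m. real m powi (int n - int g))"
    using h by simp
next
  fix M :: "'b graph" assume w: "wf_graph M"
  have cyc: "\<forall>k. has_cycle M k \<longrightarrow> 3 \<le> k" unfolding has_cycle_def by blast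
  have "(\<lambda>m. real (chrom_poly M m) - real (P_DP M m)) \<in> O(\<lambda>m. real m powi (int (card (verts M)) - int 3))"
    using bigO_main[OF w _ cyc] by simp
  then show "(\<lambda>m. real (chrom_poly M m) - real (P_DP M m)) \<in> O(\<lambda>m. real m powi (int (card (verts M)) - 3))"
    by simp
qed

end
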